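(* Let $(y^*, \mathbf{X}^*, \mathbf{Z}^* )$ be a random triple with $y^*\in\{0,1\}$, $\mathbf{X}^*\in\mathbb{R}^{1\times p}$ and $\mathbf{Z}^*\in\mathbb{R}^{1\times q}$ (row vectors), following the conditional mixture model: for $j\in\{0,1\}$, $$\mathbf{X}^*\mid (y^*=j,\mathbf{Z}^* ) \sim N(\boldsymbol\mu_j + \mathbf{Z}^*\mathbf{C},\ \boldsymbol\Sigma),\qquad P(y^*=1\mid \mathbf{Z}^* )=\frac{\exp(\gamma_0+\mathbf{Z}^*\boldsymbol\gamma_1)}{1+\exp(\gamma_0+\mathbf{Z}^*\boldsymbol\gamma_1)},$$ where $\boldsymbol\mu_0,\boldsymbol\mu_1\in\mathbb{R}^{1\times p}$, $\mathbf{C}\in\mathbb{R}^{q\times p}$, $\boldsymbol\Sigma\in\mathbb{R}^{p\times p}$ is positive definite, $\gamma_0\in\mathbb{R}$, $\boldsymbol\gamma_1\in\mathbb{R}^{q\times1}$. Assume $\mathbf{Z}^*$ has finite mean and finite nonsingular covariance matrix, and that $\mathbf{W}^*=(\mathbf{X}^*,\mathbf{Z}^* )\in\mathbb{R}^{1\times(p+q)}$ has nonsingular covariance matrix. Define $\bar{\mathbf{b}}=[\mathrm{Var}(\mathbf{W}^* )]^{-1}\mathrm{Cov}(\mathbf{W}^*,y^* )\in\mathbb{R}^{(p+q)\times 1}$, write $\bar{\mathbf{b}}=(\bar{\mathbf{b}}_1^\top,\bar{\mathbf{b}}_2^\top)^\top$ with $\bar{\mathbf{b}}_1\in\mathbb{R}^{p\times1}$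 the coefficients associated with $\mathbf{X}^*$, and let $\varepsilon=y^*-\mathbf{W}^*\bar{\mathbf{b}}$. Let $\boldsymbol\beta_1=\boldsymbol\Sigma^{-1}(\boldsymbol\mu_1-\boldsymbol\mu_0)^\top$. Then, provided $\mathrm{Var}(\varepsilon)>0$, $$\boldsymbol\beta_1=[\mathrm{Var}(\varepsilon)]^{-1}\,\bar{\mathbf{b}}_1 .$$
   Context: For random row vectors $\mathbf{V}_1,\mathbf{V}_2$, $\mathrm{Cov}(\mathbf{V}_1,\mathbf{V}_2)=E[\{\mathbf{V}_1-E\mathbf{V}_1\}^\top\{\mathbf{V}_2-E\mathbf{V}_2\}]$ and $\mathrm{Var}(\mathbf{V}_1)=\mathrm{Cov}(\mathbf{V}_1,\mathbf{V}_1)$. The vector $\boldsymbol\beta_1$ is the coefficient of $\mathbf{X}^*$ in the logistic model $P(y^*=1\mid\mathbf{Z}^*,\mathbf{X}^* )$ implied by the conditional mixture model. *)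

theory Defs
  imports "HOL-Probability.Probability"
begin

text \<open>Row vectors in R^(1 x n) are modelled as elements of real^'n; a matrix in
  R^(m x n) is real^'n^'m (m rows, n columns).  Z C is  z v* C.\<close>

definition logistic :: "real \<Rightarrow> real" where
  "logistic t = exp t / (1 + exp t)"

definition pos_def_mat :: "real^'n^'n \<Rightarrow> bool" where
  "pos_def_mat S \<longleftrightarrow> transpose S = S \<and> (\<forall>x. x \<noteq> 0 \<longrightarrow> x \<bullet> (S *v x) > 0)"

definition mvn_density :: "real^'n^'n \<Rightarrow> real^'n \<Rightarrow> real^'n \<Rightarrow> real" where
  "mvn_density S m x =
     exp (- ((x - m) \<bullet> (matrix_inv S *v (x - m))) / 2)
       / sqrt ((2 * pi) ^ CARD('n) * det S)"

definition mvn :: "real^'n^'n \<Rightarrow> real^'n \<Rightarrow> (real^'n) measure" where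
  "mvn S m = density lborel (\<lambda>x. ennreal (mvn_density S m x))"

definition cov_mat :: "'w measure \<Rightarrow> ('w \<Rightarrow> real^'a) \<Rightarrow> ('w \<Rightarrow> real^'b) \<Rightarrow> real^'b^'a" where
  "cov_mat M U V = (\<chi> i j. prob_space.expectation M
      (\<lambda>w. (U w $ i - prob_space.expectation M (\<lambda>v. U v $ i)) *
           (V w $ j - prob_space.expectation M (\<lambda>v. V v $ j))))"

definition cov_vec :: "'w measure \<Rightarrow> ('w \<Rightarrow> real^'a) \<Rightarrow> ('w \<Rightarrow> real) \<Rightarrow> real^'a" where
  "cov_vec M U y = (\<chi> i. prob_space.expectation M
      (\<lambda>w. (U w $ i - prob_space.expectation M (\<lambda>v. U v $ i)) *
           (y w - prob_space.expectation M y)))"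

definition vconcat :: "real^'p \<Rightarrow> real^'q \<Rightarrow> real^('p + 'q)" where
  "vconcat x z = (\<chi> i. case i of Inl k \<Rightarrow> x $ k | Inr k \<Rightarrow> z $ k)"

end

theory Submission
  imports Defs "HOL-Real_Asymp.Real_Asymp"
begin


lemma R1: fixes u :: real assumes "0 \<le> u" shows "sinh u \<le> u * cosh u"
proof -
  have "(\<lambda>x. x * cosh x - sinh x) 0 \<le> (\<lambda>x. x * cosh x - sinh (x::real)) u"
  proof (rule DERIV_nonneg_imp_nondecreasing[OF assms, where f="\<lambda>x. x * cosh x - sinh x"])
    fix x :: real assume x: "0 \<le> x"
    have d: "((\<lambda>x. x * cosh x - sinh x) has_real_derivative (1 * cosh x + x * sinh x - cosh x)) (at x)"
      by (auto intro!: derivative_eq_intros)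
    have n: "0 \<le> 1 * cosh x + x * sinh x - cosh x" using x by simp
    show "\<exists>y. ((\<lambda>x. x * cosh x - sinh x) has_real_derivative y) (at x) \<and> 0 \<le> y"
      by (rule exI, rule conjI[OF d n])
  qed
  then show ?thesis by simp
qed

lemma R2: fixes u :: real assumes "0 \<le> u" shows "cosh u - 1 \<le> u * sinh u"
proof -
  have "(\<lambda>x. x * sinh x - cosh x) 0 \<le> (\<lambda>x. x * sinh x - cosh (x::real)) u"
  proof (rule DERIV_nonneg_imp_nondecreasing[OF assms, where f="\<lambda>x. x * sinh x - cosh x"])
    fix x :: real assume x: "0 \<le> x"
    have d: "((\<lambda>x. x * sinh x - cosh x) has_real_derivative (1 * sinh x + x * cosh x - sinh x)) (at x)"
      by (auto intro!: derivative_eq_intros)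
    have n: "0 \<le> 1 * sinh x + x * cosh x - sinh x" using x by simp
    show "\<exists>y. ((\<lambda>x. x * sinh x - cosh x) has_real_derivative y) (at x) \<and> 0 \<le> y"
      by (rule exI, rule conjI[OF d n])
  qed
  then show ?thesis by simp
qed

lemma R3: fixes u :: real assumes "0 \<le> u" shows "1 + u^2/2 \<le> cosh u"
proof -
  have "(\<lambda>x. cosh x - x^2/2) 0 \<le> (\<lambda>x. cosh x - x^2/(2::real)) u"
  proof (rule DERIV_nonneg_imp_nondecreasing[OF assms, where f="\<lambda>x. cosh x - x^2/2"])
    fix x :: real assume "0 \<le> x"
    then have "x \<le> sinh x" using real_le_x_sinh[of x] by (simp add: sinh_field_def exp_minus)
    have d: "((\<lambda>x. cosh x - x^2/2) has_real_derivative (sinh x - x)) (at x)"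
      by (auto intro!: derivative_eq_intros)
    have n: "0 \<le> sinh x - x" using \<open>x \<le> sinh x\<close> by simp
    show "\<exists>y. ((\<lambda>x. cosh x - x^2/2) has_real_derivative y) (at x) \<and> 0 \<le> y"
      by (rule exI, rule conjI[OF d n])
  qed
  then show ?thesis by simp
qed

lemma cosh_abs_real: "cosh \<bar>u::real\<bar> = cosh u"
  by (cases "u \<ge> 0") auto

lemma sinh_abs_real: "\<bar>sinh (u::real)\<bar> = sinh \<bar>u\<bar>"
  by (cases "u \<ge> 0") auto

lemma D1: "\<bar>sinh (u::real)\<bar> \<le> \<bar>u\<bar> * cosh u"
proof (cases "u \<ge> 0")
  case True then show ?thesis using R1[of u] by simp
next
  case False then show ?thesis using R1[of "-u"] by simp
qed

lemma D2: "cosh (u::real) - 1 \<le> u^2 * cosh u"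
proof -
  have "cosh \<bar>u\<bar> - 1 \<le> \<bar>u\<bar> * sinh \<bar>u\<bar>" by (rule R2) simp
  also have "\<dots> \<le> \<bar>u\<bar> * (\<bar>u\<bar> * cosh \<bar>u\<bar>)" by (intro mult_left_mono R1) auto
  finally show ?thesis by (simp add: cosh_abs_real power2_eq_square)
qed

lemma D3: "u^2 \<le> 2 * cosh (u::real)" "\<bar>u\<bar> \<le> cosh u"
proof -
  have c: "1 + \<bar>u\<bar>^2/2 \<le> cosh u" using R3[of "\<bar>u\<bar>"] by (simp add: cosh_abs_real)
  then show "u^2 \<le> 2 * cosh u" by simp
  have "\<bar>u\<bar> \<le> 1 + \<bar>u\<bar>^2/2"
  proof -
    have "0 \<le> (\<bar>u\<bar> - 1)^2" by (rule zero_le_power2)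
    also have "(\<bar>u\<bar> - 1)^2 = \<bar>u\<bar>^2 - 2*\<bar>u\<bar> + 1" by (simp add: power2_diff)
    finally show ?thesis by linarith
  qed
  then show "\<bar>u\<bar> \<le> cosh u" using c by simp
qed

lemma cosh_mono_abs: "\<bar>u::real\<bar> \<le> \<bar>v\<bar> \<Longrightarrow> cosh u \<le> cosh v"
  using cosh_real_nonneg_le_iff[of "\<bar>u\<bar>" "\<bar>v\<bar>"] by (simp add: cosh_abs_real)

lemma D4: "0 \<le> cosh (u::real) - 1" using cosh_real_ge_1[of u] by simp



lemma matrix_inv_both:
  fixes A :: "real^'n^'n"
  assumes "invertible A"
  shows "A ** matrix_inv A = mat 1" "matrix_inv A ** A = mat 1"
proof -
  have "\<exists>A'. A ** A' = mat 1 \<and> A' ** A = mat 1" using assms unfolding invertible_def by blast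
  then have "A ** matrix_inv A = mat 1 \<and> matrix_inv A ** A = mat 1"
    unfolding matrix_inv_def by (rule someI_ex)
  then show "A ** matrix_inv A = mat 1" "matrix_inv A ** A = mat 1" by auto
qed

lemma matrix_inv_mv:
  fixes A :: "real^'n^'n"
  assumes "invertible A"
  shows "A *v (matrix_inv A *v x) = x" "matrix_inv A *v (A *v x) = x"
  using matrix_inv_both[OF assms] by (simp_all add: matrix_vector_mul_assoc)

lemma posdef_invertible:
  fixes S :: "real^'n^'n"
  assumes "pos_def_mat S" shows "invertible S"
proof -
  have "\<forall>x. S *v x = 0 \<longrightarrow> x = 0"
  proof (intro allI impI)
    fix x assume "S *v x = 0"
    then have "\<not> (0 < x \<bullet> (S *v x))" by simp
    then show "x = 0" using assms unfolding pos_def_mat_def by blast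
  qed
  then obtain B where B: "B ** S = mat 1" using matrix_left_invertible_ker by blast
  then have "S ** B = mat 1" using matrix_left_right_inverse by blast
  with B show ?thesis unfolding invertible_def by blast
qed

lemma posdef_sym_inv:
  fixes S :: "real^'n^'n"
  assumes "pos_def_mat S"
  shows "transpose (matrix_inv S) = matrix_inv S"
proof -
  have inv: "invertible S" by (rule posdef_invertible[OF assms])
  have St: "transpose S = S" using assms unfolding pos_def_mat_def by blast
  note I = matrix_inv_both[OF inv]
  have 1: "S ** transpose (matrix_inv S) = mat 1"
    by (metis I(2) St matrix_transpose_mul transpose_mat)
  have "transpose (matrix_inv S) = (matrix_inv S ** S) ** transpose (matrix_inv S)"
    using I by (simp add: matrix_mul_lid)
  also have "\<dots> = matrix_inv S ** (S ** transpose (matrix_inv S))"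
    by (simp add: matrix_mul_assoc)
  also have "\<dots> = matrix_inv S" using 1 by (simp add: matrix_mul_rid)
  finally show ?thesis .
qed

lemma inner_sym_mat:
  fixes A :: "real^'n^'n"
  assumes "transpose A = A"
  shows "x \<bullet> (A *v y) = y \<bullet> (A *v x)"
  by (metis assms dot_lmul_matrix inner_commute transpose_matrix_vector)

lemma complete_square:
  fixes S :: "real^'n^'n"
  assumes "pos_def_mat S"
  shows "(x - S *v a) \<bullet> (matrix_inv S *v (x - S *v a))
      = x \<bullet> (matrix_inv S *v x) - 2 * (a \<bullet> x) + a \<bullet> (S *v a)"
proof -
  have inv: "invertible S" by (rule posdef_invertible[OF assms])
  have St: "transpose S = S" using assms unfolding pos_def_mat_def by blast
  have Sit: "transpose (matrix_inv S) = matrix_inv S" by (rule posdef_sym_inv[OF assms])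
  have e1: "matrix_inv S *v (S *v a) = a" by (rule matrix_inv_mv(2)[OF inv])
  have e2: "(S *v a) \<bullet> (matrix_inv S *v x) = a \<bullet> x"
    using inner_sym_mat[OF Sit, of "S *v a" x] e1 by (simp add: inner_commute)
  show ?thesis
    by (simp add: matrix_vector_mult_diff_distrib inner_diff_left inner_diff_right e1 e2
        inner_commute[of _ a])
qed

lemma mvn_density_shift: "mvn_density S m x = mvn_density S 0 (x - m)"
  by (simp add: mvn_density_def)

lemma mvn_density_cont: "continuous_on UNIV (mvn_density S m)"
  unfolding mvn_density_def divide_inverse[of "exp _"]
  by (intro continuous_intros continuous_on_compose2[OF matrix_vector_mult_linear_continuous_on]) auto

lemma mvn_density_meas[measurable]: "mvn_density S m \<in> borel_measurable borel"
  by (rule borel_measurable_continuous_onI[OF mvn_density_cont])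


lemma sets_mvn[simp, measurable_cong]: "sets (mvn S m) = sets borel"
  by (simp add: mvn_def)

lemma space_mvn[simp]: "space (mvn S m) = UNIV"
  by (simp add: mvn_def)

lemma nn_integral_lborel_shift:
  fixes H :: "'a::euclidean_space \<Rightarrow> ennreal"
  assumes [measurable]: "H \<in> borel_measurable borel"
  shows "(\<integral>\<^sup>+x. H x \<partial>lborel) = (\<integral>\<^sup>+u. H (m + u) \<partial>lborel)"
proof -
  have "(\<integral>\<^sup>+x. H x \<partial>lborel) = (\<integral>\<^sup>+x. H x \<partial>distr lborel borel ((+) m))"
    by (simp add: lborel_distr_plus)
  also have "\<dots> = (\<integral>\<^sup>+u. H (m + u) \<partial>lborel)"
    by (subst nn_integral_distr) auto
  finally show ?thesis .
qed

lemma mvn_shift: "mvn S m = distr (mvn S 0) borel ((+) m)"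
proof (rule measure_eqI)
  show "sets (mvn S m) = sets (distr (mvn S 0) borel ((+) m))" by simp
next
  fix A assume A: "A \<in> sets (mvn S m)"
  then have [measurable]: "A \<in> sets borel" by simp
  have "emeasure (mvn S m) A = (\<integral>\<^sup>+x. ennreal (mvn_density S m x) * indicator A x \<partial>lborel)"
    unfolding mvn_def by (subst emeasure_density) auto
  also have "\<dots> = (\<integral>\<^sup>+u. ennreal (mvn_density S m (m + u)) * indicator A (m + u) \<partial>lborel)"
    by (rule nn_integral_lborel_shift) auto
  also have "\<dots> = (\<integral>\<^sup>+u. ennreal (mvn_density S 0 u) * indicator ((+) m -` A) u \<partial>lborel)"
    by (simp add: mvn_density_shift[of S m] indicator_def)
  also have "\<dots> = emeasure (mvn S 0) ((+) m -` A)"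
  proof -
    have "(+) m -` A \<in> sets borel" using measurable_sets[of "(+) m" borel borel A] by auto
    then show ?thesis unfolding mvn_def by (subst emeasure_density) auto
  qed
  also have "\<dots> = emeasure (distr (mvn S 0) borel ((+) m)) A"
    by (subst emeasure_distr) auto
  finally show "emeasure (mvn S m) A = emeasure (distr (mvn S 0) borel ((+) m)) A" .
qed

lemma mvn_mass: "emeasure (mvn S m) UNIV = emeasure (mvn S 0) UNIV"
  by (subst mvn_shift) (simp add: emeasure_distr)


lemma lim_cosh: "(\<lambda>n. 2*(real n+1)^2*(cosh(y/(real n+1)) - 1)) \<longlonglongrightarrow> (y::real)^2"
proof -
  have "(\<lambda>n. 2*(real n+1)^2*(cosh(y/(real n+1)) - 1)) \<longlonglongrightarrow> y*y" by real_asymp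
  then show ?thesis by (simp add: power2_eq_square)
qed
lemma lim_exp: "(\<lambda>n. 2*(real n+1)^2*(exp(c/(2*(real n+1)^2)) - 1)) \<longlonglongrightarrow> (c::real)"
  by real_asymp
lemma lim_sinh: "(\<lambda>n. (real n+1) * sinh(y/(real n+1))) \<longlonglongrightarrow> (y::real)"
  by real_asymp

lemma abs_div_le: assumes "1 \<le> (k::real)" shows "\<bar>y / k\<bar> \<le> \<bar>y\<bar>"
proof -
  have "\<bar>y / k\<bar> = \<bar>y\<bar> / k" using assms by (simp add: abs_div)
  also have "\<dots> \<le> \<bar>y\<bar> / 1" by (rule divide_left_mono) (use assms in auto)
  finally show ?thesis by simp
qed

locale gauss =
  fixes S :: "real^'n^'n"
  assumes pd: "pos_def_mat S" and P: "prob_space (mvn S 0)"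
begin

abbreviation "N \<equiv> mvn S 0"

sublocale NP: prob_space N by (rule P)

lemma cosh_meas[measurable]: "(cosh :: real \<Rightarrow> real) \<in> borel_measurable borel"
  by (intro borel_measurable_continuous_onI continuous_intros)

lemma sinh_meas[measurable]: "(sinh :: real \<Rightarrow> real) \<in> borel_measurable borel"
  by (intro borel_measurable_continuous_onI continuous_intros)

lemma sym: "transpose S = S" using pd unfolding pos_def_mat_def by blast

lemma dens_identity:
  "mvn_density S 0 x * exp (a \<bullet> x) = exp (a \<bullet> (S *v a) / 2) * mvn_density S (S *v a) x"
proof -
  let ?Q = "x \<bullet> (matrix_inv S *v x)" and ?c = "a \<bullet> (S *v a)"
    and ?D = "sqrt ((2 * pi) ^ CARD('n) * det S)"
  have "mvn_density S (S *v a) x = exp (- (?Q - 2 * (a \<bullet> x) + ?c) / 2) / ?D"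
    unfolding mvn_density_def complete_square[OF pd] ..
  moreover have "mvn_density S 0 x = exp (- ?Q / 2) / ?D" unfolding mvn_density_def by simp
  moreover have "exp (- ?Q / 2) * exp (a \<bullet> x) = exp (?c / 2) * exp (- (?Q - 2 * (a \<bullet> x) + ?c) / 2)"
    unfolding exp_add[symmetric] by (rule arg_cong[where f=exp]) (simp add: field_simps)
  ultimately show ?thesis by (simp add: field_simps)
qed

lemma mgf_nn: "(\<integral>\<^sup>+x. ennreal (exp (a \<bullet> x)) \<partial>N) = ennreal (exp (a \<bullet> (S *v a) / 2))"
proof -
  have "(\<integral>\<^sup>+x. ennreal (exp (a \<bullet> x)) \<partial>N) =
      (\<integral>\<^sup>+x. ennreal (mvn_density S 0 x) * ennreal (exp (a \<bullet> x)) \<partial>lborel)"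
    unfolding mvn_def by (subst nn_integral_density) auto
  also have "\<dots> = (\<integral>\<^sup>+x. ennreal (exp (a \<bullet> (S *v a) / 2)) * ennreal (mvn_density S (S *v a) x) \<partial>lborel)"
  proof (rule nn_integral_cong)
    fix x
    have "ennreal (mvn_density S 0 x) * ennreal (exp (a \<bullet> x)) = ennreal (mvn_density S 0 x * exp (a \<bullet> x))"
      by (rule ennreal_mult''[symmetric]) simp
    also have "\<dots> = ennreal (exp (a \<bullet> (S *v a) / 2)) * ennreal (mvn_density S (S *v a) x)"
      unfolding dens_identity by (rule ennreal_mult') simp
    finally show "ennreal (mvn_density S 0 x) * ennreal (exp (a \<bullet> x)) =
      ennreal (exp (a \<bullet> (S *v a) / 2)) * ennreal (mvn_density S (S *v a) x)" .
  qed
  also have "\<dots> = ennreal (exp (a \<bullet> (S *v a) / 2)) * (\<integral>\<^sup>+x. ennreal (mvn_density S (S *v a) x) \<partial>lborel)"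
    by (rule nn_integral_cmult) auto
  also have "(\<integral>\<^sup>+x. ennreal (mvn_density S (S *v a) x) \<partial>lborel) = emeasure (mvn S (S *v a)) UNIV"
    unfolding mvn_def by (subst emeasure_density) auto
  also have "\<dots> = 1" using mvn_mass[of S "S *v a"] prob_space.emeasure_space_1[OF P] by simp
  finally show ?thesis by simp
qed

lemma inner_meas[measurable]: "(\<lambda>x. a \<bullet> x) \<in> borel_measurable borel"
  by (intro borel_measurable_continuous_onI continuous_intros)

lemma inner_meas'[measurable]: "(\<bullet>) a \<in> borel_measurable borel"
  using inner_meas[of a] by (simp add: fun_eq_iff)

lemma mgf_integrable: "integrable N (\<lambda>x. exp (a \<bullet> x))"
  by (rule integrableI_nonneg) (auto simp: mgf_nn)

lemma mgf: "(\<integral>x. exp (a \<bullet> x) \<partial>N) = exp (a \<bullet> (S *v a) / 2)"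
  by (subst integral_eq_nn_integral) (auto simp: mgf_nn)

lemma e12: "integrable N (\<lambda>x. exp (t * (a \<bullet> x)))" "integrable N (\<lambda>x. exp (- (t * (a \<bullet> x))))"
  using mgf_integrable[of "t *\<^sub>R a"] mgf_integrable[of "- t *\<^sub>R a"] by simp_all

lemma e12v: "(\<integral>x. exp (t * (a \<bullet> x)) \<partial>N) = exp (t^2 * (a \<bullet> (S *v a)) / 2)"
   "(\<integral>x. exp (- (t * (a \<bullet> x))) \<partial>N) = exp (t^2 * (a \<bullet> (S *v a)) / 2)"
  using mgf[of "t *\<^sub>R a"] mgf[of "- t *\<^sub>R a"]
  by (simp_all add: matrix_vector_mult_scaleR power2_eq_square vec.neg)


lemma cosh_integrable: "integrable N (\<lambda>x. cosh (t * (a \<bullet> x)))"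
proof -
  have "integrable N (\<lambda>x. (exp (t * (a \<bullet> x)) + exp (- (t * (a \<bullet> x)))) / 2)"
    by (intro integrable_divide_zero Bochner_Integration.integrable_add e12)
  then show ?thesis by (simp add: cosh_field_def [where 'a=real])
qed

lemma cosh_integral: "(\<integral>x. cosh (t * (a \<bullet> x)) \<partial>N) = exp (t^2 * (a \<bullet> (S *v a)) / 2)"
proof -
  have "(\<integral>x. cosh (t * (a \<bullet> x)) \<partial>N) = (\<integral>x. (exp (t * (a \<bullet> x)) + exp (- (t * (a \<bullet> x)))) / 2 \<partial>N)"
    by (simp add: cosh_field_def)
  also have "\<dots> = ((\<integral>x. exp (t * (a \<bullet> x)) \<partial>N) + (\<integral>x. exp (- (t * (a \<bullet> x))) \<partial>N)) / 2"
    using e12 by (simp add: integral_add)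
  finally show ?thesis unfolding e12v by simp
qed

lemma sinh_integral: "(\<integral>x. sinh (t * (a \<bullet> x)) \<partial>N) = 0"
proof -
  have "(\<integral>x. sinh (t * (a \<bullet> x)) \<partial>N) = (\<integral>x. (exp (t * (a \<bullet> x)) - exp (- (t * (a \<bullet> x)))) / 2 \<partial>N)"
    by (simp add: sinh_field_def)
  also have "\<dots> = ((\<integral>x. exp (t * (a \<bullet> x)) \<partial>N) - (\<integral>x. exp (- (t * (a \<bullet> x))) \<partial>N)) / 2"
    using e12 by (simp add: integral_diff)
  finally show ?thesis unfolding e12v by simp
qed

lemma dom_integrable: "integrable N (\<lambda>x. cosh (2 * (a \<bullet> x)) + 1)"
  using cosh_integrable[of 2 a] by (intro Bochner_Integration.integrable_add) auto
lemma cosh_sq: "cosh (u::real) * cosh u \<le> cosh (2 * u) + 1"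
  using cosh_double[of u] cosh_square_eq[of u] by (simp add: power2_eq_square)

lemma second_moment:
  "integrable N (\<lambda>x. (a \<bullet> x)^2) \<and> (\<integral>x. (a \<bullet> x)^2 \<partial>N) = a \<bullet> (S *v a)"
proof -
  define s where "s n x = 2*(real n+1)^2*(cosh((a \<bullet> x)/(real n+1)) - 1)" for n x
  define w where "w x = 4 * (cosh (2 * (a \<bullet> x)) + 1)" for x
  have sm[measurable]: "s n \<in> borel_measurable N" for n unfolding s_def by measurable
  have wi: "integrable N w" unfolding w_def by (intro integrable_mult_right dom_integrable)
  have lim: "AE x in N. (\<lambda>n. s n x) \<longlonglongrightarrow> (a \<bullet> x)^2" unfolding s_def using lim_cosh by simp
  have bnd: "AE x in N. norm (s n x) \<le> w x" for n
  proof (rule AE_I2)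
    fix x
    let ?Y = "a \<bullet> x" and ?k = "real n + 1"
    have k: "?k \<ge> 1" by simp
    have "0 \<le> s n x" unfolding s_def using D4[of "?Y / ?k"] by simp
    have cpos: "0 \<le> cosh (?Y / ?k)" by simp
    have "s n x \<le> 2 * ?k^2 * ((?Y/?k)^2 * cosh (?Y / ?k))"
      unfolding s_def using D2[of "?Y / ?k"] by (intro mult_left_mono) auto
    also have "2 * ?k^2 * ((?Y/?k)^2 * cosh (?Y / ?k)) = 2 * ?Y^2 * cosh (?Y / ?k)"
    proof -
      have e: "?k^2 * (?Y/?k)^2 = ?Y^2" using k by (simp add: power_divide)
      have "2 * ?k^2 * ((?Y/?k)^2 * cosh (?Y / ?k)) = 2 * (?k^2 * (?Y/?k)^2) * cosh (?Y / ?k)"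
        by (simp only: mult.assoc)
      also have "\<dots> = 2 * ?Y^2 * cosh (?Y/?k)" by (simp only: e)
      finally show ?thesis .
    qed
    also have "\<dots> \<le> 2 * ?Y^2 * cosh ?Y"
      using k by (intro mult_left_mono cosh_mono_abs abs_div_le) auto
    also have "\<dots> \<le> 2 * (2 * cosh ?Y) * cosh ?Y"
      using D3(1)[of ?Y] by (intro mult_right_mono mult_left_mono) auto
    also have "\<dots> = 4 * (cosh ?Y * cosh ?Y)" by simp
    also have "\<dots> \<le> w x" unfolding w_def using cosh_sq[of ?Y] by simp
    finally have "s n x \<le> w x" .
    then show "norm (s n x) \<le> w x" using \<open>0 \<le> s n x\<close> by simp
  qed
  have i1: "integrable N (\<lambda>x. (a \<bullet> x)^2)"
    by (rule integrable_dominated_convergence[OF _ sm wi lim bnd]) measurable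
  have t1: "(\<lambda>n. integral\<^sup>L N (s n)) \<longlonglongrightarrow> (\<integral>x. (a \<bullet> x)^2 \<partial>N)"
    by (rule integral_dominated_convergence[OF _ sm wi lim bnd]) measurable
  have "integral\<^sup>L N (s n) = 2*(real n+1)^2*(exp((a \<bullet> (S *v a))/(2*(real n+1)^2)) - 1)" for n
  proof -
    have "integral\<^sup>L N (s n) = 2*(real n+1)^2*((\<integral>x. cosh((1/(real n+1)) * (a \<bullet> x)) \<partial>N) - 1)"
    proof -
      have pu: "NP.prob UNIV = 1" using NP.prob_space by simp
      show ?thesis
      unfolding s_def using cosh_integrable[of "1/(real n+1)" a]
      by (simp add: pu field_simps)
    qed
    then show ?thesis unfolding cosh_integral by (simp add: power_divide field_simps)
  qed
  then have t2: "(\<lambda>n. integral\<^sup>L N (s n)) \<longlonglongrightarrow> a \<bullet> (S *v a)" using lim_exp by simp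
  show ?thesis using i1 LIMSEQ_unique[OF t1 t2] by simp
qed

lemma first_moment:
  "integrable N (\<lambda>x. a \<bullet> x) \<and> (\<integral>x. a \<bullet> x \<partial>N) = 0"
proof -
  define s where "s n x = (real n+1) * sinh((a \<bullet> x)/(real n+1))" for n x
  define w where "w x = cosh (2 * (a \<bullet> x)) + 1" for x
  have sm[measurable]: "s n \<in> borel_measurable N" for n unfolding s_def by measurable
  have wi: "integrable N w" unfolding w_def using dom_integrable by simp
  have lim: "AE x in N. (\<lambda>n. s n x) \<longlonglongrightarrow> a \<bullet> x" unfolding s_def using lim_sinh by simp
  have bnd: "AE x in N. norm (s n x) \<le> w x" for n
  proof (rule AE_I2)
    fix x
    let ?Y = "a \<bullet> x" and ?k = "real n + 1"
    have k: "?k \<ge> 1" by simp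
    have "norm (s n x) = ?k * \<bar>sinh (?Y / ?k)\<bar>" unfolding s_def by (simp add: abs_mult)
    also have "\<dots> \<le> ?k * (\<bar>?Y / ?k\<bar> * cosh (?Y / ?k))" by (intro mult_left_mono D1) auto
    also have "\<dots> = \<bar>?Y\<bar> * cosh (?Y / ?k)" by (simp add: abs_div)
    also have "\<dots> \<le> cosh ?Y * cosh ?Y"
    proof (intro mult_mono)
      show "\<bar>?Y\<bar> \<le> cosh ?Y" by (rule D3)
      show "cosh (?Y / ?k) \<le> cosh ?Y"
        using k by (intro cosh_mono_abs abs_div_le)
    qed auto
    also have "\<dots> \<le> w x" unfolding w_def by (rule cosh_sq)
    finally show "norm (s n x) \<le> w x" .
  qed
  have i1: "integrable N (\<lambda>x. a \<bullet> x)"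
    by (rule integrable_dominated_convergence[OF _ sm wi lim bnd]) measurable
  have t1: "(\<lambda>n. integral\<^sup>L N (s n)) \<longlonglongrightarrow> (\<integral>x. a \<bullet> x \<partial>N)"
    by (rule integral_dominated_convergence[OF _ sm wi lim bnd]) measurable
  have "integral\<^sup>L N (s n) = 0" for n
  proof -
    have "integral\<^sup>L N (s n) = (real n+1) * (\<integral>x. sinh((1/(real n+1)) * (a \<bullet> x)) \<partial>N)"
      unfolding s_def by simp
    then show ?thesis unfolding sinh_integral by simp
  qed
  then have t2: "(\<lambda>n. integral\<^sup>L N (s n)) \<longlonglongrightarrow> 0" by simp
  show ?thesis using i1 LIMSEQ_unique[OF t1 t2] by simp
qed

lemma cross_moment:
  "integrable N (\<lambda>x. (a \<bullet> x) * (b \<bullet> x)) \<and> (\<integral>x. (a \<bullet> x) * (b \<bullet> x) \<partial>N) = a \<bullet> (S *v b)"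
proof -
  have e: "(a \<bullet> x) * (b \<bullet> x) = (((a + b) \<bullet> x)^2 - ((a - b) \<bullet> x)^2) / 4" for x
    by (simp add: inner_add_left inner_diff_left power2_eq_square field_simps)
  note m1 = second_moment[of "a + b"] and m2 = second_moment[of "a - b"]
  have "integrable N (\<lambda>x. (((a + b) \<bullet> x)^2 - ((a - b) \<bullet> x)^2) / 4)" using m1 m2 by simp
  moreover have "(\<integral>x. (((a + b) \<bullet> x)^2 - ((a - b) \<bullet> x)^2) / 4 \<partial>N) = a \<bullet> (S *v b)"
  proof -
    have "(\<integral>x. (((a + b) \<bullet> x)^2 - ((a - b) \<bullet> x)^2) / 4 \<partial>N)
       = ((a + b) \<bullet> (S *v (a + b)) - (a - b) \<bullet> (S *v (a - b))) / 4"
      using m1 m2 by simp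
    also have "\<dots> = a \<bullet> (S *v b)"
      using inner_sym_mat[OF sym, of a b]
      by (simp add: matrix_vector_right_distrib matrix_vector_mult_diff_distrib inner_add_left inner_add_right
          inner_diff_left inner_diff_right)
    finally show ?thesis .
  qed
  ultimately show ?thesis unfolding e by simp
qed

end



lemma logistic_bounds: "0 \<le> logistic t" "logistic t \<le> 1"
  unfolding logistic_def by (auto simp: add_pos_pos)

locale lmodel =
  fixes M :: "'w measure" and y :: "'w \<Rightarrow> real" and X :: "'w \<Rightarrow> real^'p"
    and Z :: "'w \<Rightarrow> real^'q"
    and \<mu>0 \<mu>1 :: "real^'p" and C :: "real^'p^'q" and \<Sigma> :: "real^'p^'p"
    and \<gamma>0 :: real and \<gamma>1 :: "real^'q"
  assumes PS: "prob_space M"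
    and ym[measurable]: "y \<in> borel_measurable M" and Xm[measurable]: "X \<in> borel_measurable M"
    and Zm[measurable]: "Z \<in> borel_measurable M"
    and y01: "\<forall>w\<in>space M. y w \<in> {0, 1}"
    and pd: "pos_def_mat \<Sigma>"
    and model: "distr M borel (\<lambda>w. (Z w, y w, X w)) =
      bind (distr M borel Z) (\<lambda>z.
        bind (measure_pmf (bernoulli_pmf (logistic (\<gamma>0 + z \<bullet> \<gamma>1)))) (\<lambda>j.
          bind (mvn \<Sigma> ((if j then \<mu>1 else \<mu>0) + z v* C)) (\<lambda>x.
            return borel (z, (if j then 1 else 0), x))))"
begin

definition "N0 = mvn \<Sigma> 0"
definition "lg z = logistic (\<gamma>0 + z \<bullet> \<gamma>1)"
definition "cj j = (if j then 1 else 0 :: real)"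
definition "mu j z = (if j then \<mu>1 else \<mu>0) + z v* C"
definition "innerK z j = distr N0 borel (\<lambda>u. (z, cj j, mu j z + u))"
definition "middle z = bind (measure_pmf (bernoulli_pmf (lg z))) (innerK z)"
definition "ZL = distr M borel Z"
definition "KK = emeasure N0 UNIV"

lemma sets_N0[simp, measurable_cong]: "sets N0 = sets borel" by (simp add: N0_def)
lemma space_N0[simp]: "space N0 = UNIV" by (simp add: N0_def)

lemma lg_bounds: "0 \<le> lg z" "lg z \<le> 1" by (simp_all add: lg_def logistic_bounds)

lemma mu_cont: "continuous_on UNIV (mu j)"
proof -
  have "continuous_on UNIV (\<lambda>z. transpose C *v z)" by (rule matrix_vector_mult_linear_continuous_on)
  then show ?thesis unfolding mu_def transpose_matrix_vector by (intro continuous_intros)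
qed

lemma mu_meas[measurable]: "mu j \<in> borel_measurable borel"
  by (rule borel_measurable_continuous_onI[OF mu_cont])

lemma lg_meas[measurable]: "lg \<in> borel_measurable borel"
  unfolding lg_def logistic_def by measurable

lemma inner_eq: "bind (mvn \<Sigma> ((if j then \<mu>1 else \<mu>0) + z v* C)) (\<lambda>x. return borel (z, (if j then 1 else 0), x))
   = innerK z j"
proof -
  have "bind (mvn \<Sigma> (mu j z)) (\<lambda>x. return borel (z, cj j, x)) = distr (mvn \<Sigma> (mu j z)) borel (\<lambda>x. (z, cj j, x))"
    by (rule bind_return_distr') auto
  also have "\<dots> = distr N0 borel (\<lambda>u. (z, cj j, mu j z + u))"
    unfolding N0_def by (subst mvn_shift) (simp add: distr_distr comp_def)
  finally show ?thesis by (simp add: innerK_def mu_def cj_def)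
qed

lemma model2: "distr M borel (\<lambda>w. (Z w, y w, X w)) = bind ZL middle"
  unfolding model ZL_def middle_def lg_def inner_eq by simp

lemma sets_innerK[simp, measurable_cong]: "sets (innerK z j) = sets borel"
  by (simp add: innerK_def)

lemma emeasure_innerK_UNIV: "emeasure (innerK z j) UNIV = KK"
  by (simp add: innerK_def KK_def emeasure_distr)


context
  assumes sub: "subprob_space N0"
begin

lemma N0_in: "N0 \<in> space (subprob_algebra borel)"
  using sub by (simp add: space_subprob_algebra)

lemma innerK_meas[measurable]: "(\<lambda>z. innerK z j) \<in> measurable borel (subprob_algebra borel)"
  unfolding innerK_def
proof (rule measurable_distr2[where M = N0])
  show "(\<lambda>x. N0) \<in> borel \<rightarrow>\<^sub>M subprob_algebra N0"
    using N0_in by (simp add: subprob_algebra_cong[of N0 borel])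
  show "(\<lambda>(x, u). (x, cj j, mu j x + u)) \<in> borel \<Otimes>\<^sub>M N0 \<rightarrow>\<^sub>M borel"
    by (simp add: measurable_cong_sets[OF sets_pair_measure_cong[OF refl sets_N0] refl]) measurable
qed

lemma innerK_in: "innerK z j \<in> space (subprob_algebra borel)"
  using measurable_space[OF innerK_meas[of j], of z] by simp

lemma innerK_kernel: "innerK z \<in> measurable (measure_pmf p) (subprob_algebra borel)"
  using innerK_in by auto

lemma emeasure_middle:
  assumes "A \<in> sets borel"
  shows "emeasure (middle z) A = emeasure (innerK z True) A * ennreal (lg z) + emeasure (innerK z False) A * ennreal (1 - lg z)"
  unfolding middle_def
  by (subst emeasure_bind[OF _ innerK_kernel]) (auto simp: assms lg_bounds)

lemma sets_middle[simp, measurable_cong]: "sets (middle z) = sets borel"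
  unfolding middle_def by (rule sets_bind) auto

lemma middle_meas[measurable]: "middle \<in> measurable borel (subprob_algebra borel)"
proof (rule measurable_subprob_algebra)
  fix z :: "real^'q"
  show "subprob_space (middle z)" unfolding middle_def
    by (rule subprob_space_bind[OF _ innerK_kernel]) (simp add: prob_space_imp_subprob_space prob_space_measure_pmf)
  show "sets (middle z) = sets borel" by simp
next
  fix A :: "((real^'q) \<times> real \<times> (real^'p)) set" assume A: "A \<in> sets borel"
  show "(\<lambda>z. emeasure (middle z) A) \<in> borel_measurable borel"
  proof -
    have e[measurable]: "(\<lambda>z. emeasure (innerK z j) A) \<in> borel_measurable borel" for j
      using measurable_compose[OF innerK_meas measurable_emeasure_subprob_algebra[OF A]] by simp
    show ?thesis by (subst emeasure_middle[OF A]) measurable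
  qed
qed

lemma nn_integral_middle:
  assumes [measurable]: "F \<in> borel_measurable borel"
  shows "(\<integral>\<^sup>+x. F x \<partial>middle z) =
     (\<integral>\<^sup>+u. F (z, 1, mu True z + u) \<partial>N0) * ennreal (lg z) + (\<integral>\<^sup>+u. F (z, 0, mu False z + u) \<partial>N0) * ennreal (1 - lg z)"
  unfolding middle_def
  by (subst nn_integral_bind[OF _ innerK_kernel]) (auto simp: lg_bounds innerK_def nn_integral_distr cj_def)

lemma nn_integral_model:
  assumes [measurable]: "F \<in> borel_measurable borel"
  shows "(\<integral>\<^sup>+w. F (Z w, y w, X w) \<partial>M) = (\<integral>\<^sup>+z. \<integral>\<^sup>+x. F x \<partial>middle z \<partial>ZL)"
proof -
  have "(\<integral>\<^sup>+w. F (Z w, y w, X w) \<partial>M) = (\<integral>\<^sup>+x. F x \<partial>distr M borel (\<lambda>w. (Z w, y w, X w)))"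
    by (subst nn_integral_distr) auto
  also have "\<dots> = (\<integral>\<^sup>+z. \<integral>\<^sup>+x. F x \<partial>middle z \<partial>ZL)"
    unfolding model2 by (rule nn_integral_bind[where B=borel]) (auto simp: ZL_def)
  finally show ?thesis .
qed

end


lemma ZL_prob: "prob_space ZL"
  unfolding ZL_def by (rule prob_space.prob_space_distr[OF PS]) auto

lemma distr_nonmeas_null:
  fixes p :: "bool pmf" and f :: "bool \<Rightarrow> 'b measure"
  assumes "\<And>j. f j \<notin> space N"
  shows "emeasure (distr (measure_pmf p) N f) A = 0"
proof (cases "A \<in> sets N")
  case True
  let ?\<mu> = "\<lambda>A. emeasure (measure_pmf p) (f -` A \<inter> space (measure_pmf p))"
  have "emeasure (distr (measure_pmf p) N f) A = ?\<mu> A"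
    unfolding distr_def
  proof (rule emeasure_measure_of_sigma)
    show "sigma_algebra (space N) (sets N)" by (rule sets.sigma_algebra_axioms)
    show "positive (sets N) ?\<mu>" by (auto simp: positive_def)
    show "countably_additive (sets N) ?\<mu>"
    proof (rule countably_additiveI)
      fix B :: "nat \<Rightarrow> _" assume "range B \<subseteq> sets N" "disjoint_family B"
      then have "disjoint_family (\<lambda>i. f -` B i \<inter> space (measure_pmf p))"
        by (auto simp: disjoint_family_on_def)
      then have "(\<Sum>i. ?\<mu> (B i)) = emeasure (measure_pmf p) (\<Union>i. f -` B i \<inter> space (measure_pmf p))"
        by (intro suminf_emeasure) auto
      also have "(\<Union>i. f -` B i \<inter> space (measure_pmf p)) = f -` (\<Union>i. B i) \<inter> space (measure_pmf p)"
        by auto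
      finally show "(\<Sum>i. ?\<mu> (B i)) = ?\<mu> (\<Union>i. B i)" .
    qed
    show "A \<in> sets N" by fact
  qed
  also have "f -` A \<inter> space (measure_pmf p) = {}"
    using assms sets.sets_into_space[OF True] by auto
  finally show ?thesis by simp
qed (simp add: emeasure_notin_sets)

lemma KK_eq_1: "KK = 1"
proof (cases "KK \<le> 1")
  case True
  then have sub: "subprob_space N0" by (intro subprob_spaceI) (auto simp: KK_def)
  have "(\<integral>\<^sup>+w. 1 \<partial>M) = 1" using prob_space.emeasure_space_1[OF PS] by simp
  moreover have "(\<integral>\<^sup>+w. 1 \<partial>M) = (\<integral>\<^sup>+z. \<integral>\<^sup>+x. 1 \<partial>middle z \<partial>ZL)"
    using nn_integral_model[OF sub, of "\<lambda>_. 1"] by simp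
  moreover have "(\<integral>\<^sup>+x. 1 \<partial>middle z) = KK" for z
  proof -
    have "(\<integral>\<^sup>+x. 1 \<partial>middle z) = KK * ennreal (lg z) + KK * ennreal (1 - lg z)"
      using nn_integral_middle[OF sub, of "\<lambda>_. 1"] by (simp add: KK_def)
    also have "\<dots> = KK * (ennreal (lg z) + ennreal (1 - lg z))" by (simp add: distrib_left)
    also have "ennreal (lg z) + ennreal (1 - lg z) = 1"
      using lg_bounds[of z] by (subst ennreal_plus[symmetric]) auto
    finally show ?thesis by simp
  qed
  ultimately have "1 = (\<integral>\<^sup>+z. KK \<partial>ZL)" by simp
  also have "\<dots> = KK" using prob_space.emeasure_space_1[OF ZL_prob] by simp
  finally show ?thesis by simp
next
  case False
  have notin: "innerK z j \<notin> space (subprob_algebra borel)" for z j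
  proof
    assume "innerK z j \<in> space (subprob_algebra borel)"
    then have "subprob_space (innerK z j)" by (simp add: space_subprob_algebra)
    then have "emeasure (innerK z j) (space (innerK z j)) \<le> 1" by (rule subprob_space.emeasure_space_le_1)
    then show False using False emeasure_innerK_UNIV[of z j] by (simp add: innerK_def)
  qed
  have mid: "middle z = null_measure borel" for z
  proof (rule measure_eqI)
    have sm: "sets (middle z) = sets borel" unfolding middle_def by (rule sets_bind) auto
    then show "sets (middle z) = sets (null_measure borel)" by simp
    fix A assume "A \<in> sets (middle z)"
    then have A: "A \<in> sets borel" using sm by simp
    let ?N = "innerK z (SOME x. x \<in> space (measure_pmf (bernoulli_pmf (lg z))))"
    have sN: "sets ?N = sets borel" by simp
    let ?D = "distr (measure_pmf (bernoulli_pmf (lg z))) (subprob_algebra ?N) (innerK z)"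
    have "emeasure (middle z) A = emeasure (join ?D) A"
      unfolding middle_def by (simp add: bind_nonempty)
    also have "\<dots> = (\<integral>\<^sup>+M'. emeasure M' A \<partial>?D)"
      by (rule emeasure_join) (auto simp: A sN)
    also have "\<dots> = (\<integral>\<^sup>+M'. 0 \<partial>?D)"
    proof (rule nn_integral_cong_AE, rule AE_I[where N="space ?D"])
      show "emeasure ?D (space ?D) = 0"
      proof (rule distr_nonmeas_null)
        have "subprob_algebra ?N = subprob_algebra borel" by (rule subprob_algebra_cong[OF sN])
        then show "innerK z j \<notin> space (subprob_algebra ?N)" for j using notin by simp
      qed
    qed auto
    finally show "emeasure (middle z) A = emeasure (null_measure borel) A" by simp
  qed
  have "emeasure (distr M borel (\<lambda>w. (Z w, y w, X w))) UNIV = 1"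
    by (subst emeasure_distr) (auto simp: prob_space.emeasure_space_1[OF PS])
  moreover have "emeasure (bind ZL middle) UNIV = 0"
    unfolding mid
    by (subst emeasure_bind_const_prob_space[OF ZL_prob]) (auto simp: subprob_space_null_measure)
  ultimately show ?thesis using model2 by simp
qed

lemma N0_prob: "prob_space N0"
  by (rule prob_spaceI) (simp add: KK_eq_1[unfolded KK_def])

lemma N0_sub: "subprob_space N0"
  using N0_prob by (rule prob_space_imp_subprob_space)


interpretation g0: gauss \<Sigma>
  by (rule gauss.intro[OF pd N0_prob[unfolded N0_def]])

definition "eps z c x = x - \<mu>0 - c *\<^sub>R (\<mu>1 - \<mu>0) - z v* C"

lemma eps_mu: "eps z (cj j) (mu j z + u) = u"
  by (cases j) (simp_all add: eps_def mu_def cj_def algebra_simps)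

lemma eps_cont: "continuous_on UNIV (\<lambda>(z, c, x). eps z c x)"
proof -
  have "continuous_on UNIV (\<lambda>z. transpose C *v z)" by (rule matrix_vector_mult_linear_continuous_on)
  then have c: "continuous_on UNIV (\<lambda>z. z v* C)" by (simp add: transpose_matrix_vector)
  have "continuous_on UNIV (\<lambda>p :: (real^'q) \<times> real \<times> (real^'p). snd (snd p) - \<mu>0 - fst (snd p) *\<^sub>R (\<mu>1 - \<mu>0) - fst p v* C)"
    by (intro continuous_intros continuous_on_compose2[OF c]) auto
  then show ?thesis unfolding eps_def by (simp add: case_prod_beta')
qed

lemma eps_meas[measurable]: "(\<lambda>(z, c, x). eps z c x) \<in> borel_measurable borel"
  by (rule borel_measurable_continuous_onI[OF eps_cont])

lemma g12: "(\<lambda>p :: (real^'q) \<times> real \<times> (real^'p). (fst p, fst (snd p))) \<in> borel_measurable borel"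
  by (intro borel_measurable_continuous_onI continuous_intros)

lemma KN:
  fixes \<psi> :: "(real^'q) \<times> real \<Rightarrow> ennreal" and \<phi> :: "real^'p \<Rightarrow> ennreal"
  assumes [measurable]: "\<psi> \<in> borel_measurable borel" "\<phi> \<in> borel_measurable borel"
  shows "(\<integral>\<^sup>+w. \<psi> (Z w, y w) * \<phi> (eps (Z w) (y w) (X w)) \<partial>M) = (\<integral>\<^sup>+w. \<psi> (Z w, y w) \<partial>M) * (\<integral>\<^sup>+u. \<phi> u \<partial>N0)"
proof -
  let ?F = "\<lambda>(z, c, x). \<psi> (z, c) * \<phi> (eps z c x)"
  have Fm: "?F \<in> borel_measurable borel"
  proof -
    have "(\<lambda>p :: (real^'q) \<times> real \<times> (real^'p). \<phi> ((\<lambda>(z, c, x). eps z c x) p)) \<in> borel_measurable borel"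
      by (rule measurable_compose[OF eps_meas assms(2)])
    moreover have "(\<lambda>p :: (real^'q) \<times> real \<times> (real^'p). \<psi> (fst p, fst (snd p))) \<in> borel_measurable borel"
      by (rule measurable_compose[OF g12 assms(1)])
    ultimately show ?thesis by (simp add: case_prod_beta')
  qed
  have "(\<integral>\<^sup>+w. \<psi> (Z w, y w) * \<phi> (eps (Z w) (y w) (X w)) \<partial>M) = (\<integral>\<^sup>+w. ?F (Z w, y w, X w) \<partial>M)"
    by simp
  also have "\<dots> = (\<integral>\<^sup>+z. \<integral>\<^sup>+x. ?F x \<partial>middle z \<partial>ZL)"
    by (rule nn_integral_model[OF N0_sub Fm])
  also have "\<dots> = (\<integral>\<^sup>+z. (\<psi> (z, 1) * ennreal (lg z) + \<psi> (z, 0) * ennreal (1 - lg z)) * (\<integral>\<^sup>+u. \<phi> u \<partial>N0) \<partial>ZL)"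
  proof (rule nn_integral_cong)
    fix z
    have e1: "eps z 1 (mu True z + u) = u" "eps z 0 (mu False z + u) = u" for u
      using eps_mu[of z True u] eps_mu[of z False u] by (simp_all add: cj_def)
    show "(\<integral>\<^sup>+x. ?F x \<partial>middle z) = (\<psi> (z, 1) * ennreal (lg z) + \<psi> (z, 0) * ennreal (1 - lg z)) * (\<integral>\<^sup>+u. \<phi> u \<partial>N0)"
    proof -
      have pm: "\<phi> \<in> borel_measurable N0" by (simp add: measurable_cong_sets[OF sets_N0 refl])
      have "(\<integral>\<^sup>+x. ?F x \<partial>middle z) = (\<integral>\<^sup>+u. \<psi> (z, 1) * \<phi> u \<partial>N0) * ennreal (lg z) + (\<integral>\<^sup>+u. \<psi> (z, 0) * \<phi> u \<partial>N0) * ennreal (1 - lg z)"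
        by (subst nn_integral_middle[OF N0_sub Fm]) (simp only: e1 case_prod_conv)
      also have "\<dots> = (\<psi> (z, 1) * (\<integral>\<^sup>+u. \<phi> u \<partial>N0)) * ennreal (lg z) + (\<psi> (z, 0) * (\<integral>\<^sup>+u. \<phi> u \<partial>N0)) * ennreal (1 - lg z)"
        by (simp only: nn_integral_cmult[OF pm])
      also have "\<dots> = (\<psi> (z, 1) * ennreal (lg z) + \<psi> (z, 0) * ennreal (1 - lg z)) * (\<integral>\<^sup>+u. \<phi> u \<partial>N0)"
        by (simp only: distrib_right mult.assoc mult.commute[of "\<integral>\<^sup>+u. \<phi> u \<partial>N0"])
      finally show ?thesis .
    qed
  qed
  also have "\<dots> = (\<integral>\<^sup>+z. \<psi> (z, 1) * ennreal (lg z) + \<psi> (z, 0) * ennreal (1 - lg z) \<partial>ZL) * (\<integral>\<^sup>+u. \<phi> u \<partial>N0)"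
    by (rule nn_integral_multc) (simp add: ZL_def)
  also have "(\<integral>\<^sup>+z. \<psi> (z, 1) * ennreal (lg z) + \<psi> (z, 0) * ennreal (1 - lg z) \<partial>ZL) = (\<integral>\<^sup>+w. \<psi> (Z w, y w) \<partial>M)"
  proof -
    have Gm: "(\<lambda>(z, c, x::real^'p). \<psi> (z, c)) \<in> borel_measurable borel"
    proof -
      have "(\<lambda>p :: (real^'q) \<times> real \<times> (real^'p). \<psi> (fst p, fst (snd p))) \<in> borel_measurable borel"
        by (rule measurable_compose[OF g12 assms(1)])
      then show ?thesis by (simp add: case_prod_beta')
    qed
    have "(\<integral>\<^sup>+w. \<psi> (Z w, y w) \<partial>M) = (\<integral>\<^sup>+w. (\<lambda>(z, c, x::real^'p). \<psi> (z, c)) (Z w, y w, X w) \<partial>M)" by simp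
    also have "\<dots> = (\<integral>\<^sup>+z. \<integral>\<^sup>+x. (\<lambda>(z, c, x::real^'p). \<psi> (z, c)) x \<partial>middle z \<partial>ZL)"
      by (rule nn_integral_model[OF N0_sub Gm])
    also have "\<dots> = (\<integral>\<^sup>+z. \<psi> (z, 1) * ennreal (lg z) + \<psi> (z, 0) * ennreal (1 - lg z) \<partial>ZL)"
      by (intro nn_integral_cong, subst nn_integral_middle[OF N0_sub Gm])
         (simp add: prob_space.emeasure_space_1[OF N0_prob, simplified])
    finally show ?thesis by simp
  qed
  finally show ?thesis .
qed


sublocale MP: prob_space M by (rule PS)

lemma ZyX_meas[measurable]: "(\<lambda>w. (Z w, y w, X w)) \<in> borel_measurable M"
  by measurable

lemma comp_meas: "F \<in> borel_measurable borel \<Longrightarrow> (\<lambda>w. F (Z w, y w, X w)) \<in> borel_measurable M"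
  using measurable_compose[OF ZyX_meas] by blast

lemma prod_meas:
  fixes \<psi> :: "(real^'q) \<times> real \<Rightarrow> real" and \<phi> :: "real^'p \<Rightarrow> real"
  assumes [measurable]: "\<psi> \<in> borel_measurable borel" "\<phi> \<in> borel_measurable borel"
  shows "(\<lambda>w. \<psi> (Z w, y w) * \<phi> (eps (Z w) (y w) (X w))) \<in> borel_measurable M"
    "(\<lambda>w. \<psi> (Z w, y w)) \<in> borel_measurable M"
proof -
  have a: "(\<lambda>p :: (real^'q) \<times> real \<times> (real^'p). \<phi> ((\<lambda>(z, c, x). eps z c x) p)) \<in> borel_measurable borel"
    by (rule measurable_compose[OF eps_meas assms(2)])
  have b: "(\<lambda>p :: (real^'q) \<times> real \<times> (real^'p). \<psi> (fst p, fst (snd p))) \<in> borel_measurable borel"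
    by (rule measurable_compose[OF g12 assms(1)])
  have "(\<lambda>p :: (real^'q) \<times> real \<times> (real^'p). \<psi> (fst p, fst (snd p)) * \<phi> ((\<lambda>(z, c, x). eps z c x) p)) \<in> borel_measurable borel"
    using a b by measurable
  from comp_meas[OF this] show "(\<lambda>w. \<psi> (Z w, y w) * \<phi> (eps (Z w) (y w) (X w))) \<in> borel_measurable M"
    by simp
  from comp_meas[OF b] show "(\<lambda>w. \<psi> (Z w, y w)) \<in> borel_measurable M" by simp
qed

lemma RVpos:
  fixes \<psi> :: "(real^'q) \<times> real \<Rightarrow> real" and \<phi> :: "real^'p \<Rightarrow> real"
  assumes [measurable]: "\<psi> \<in> borel_measurable borel" "\<phi> \<in> borel_measurable borel"
    and nn: "\<And>q. 0 \<le> \<psi> q" "\<And>u. 0 \<le> \<phi> u"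
    and i1: "integrable M (\<lambda>w. \<psi> (Z w, y w))" and i2: "integrable N0 \<phi>"
  shows "integrable M (\<lambda>w. \<psi> (Z w, y w) * \<phi> (eps (Z w) (y w) (X w)))
    \<and> (\<integral>w. \<psi> (Z w, y w) * \<phi> (eps (Z w) (y w) (X w)) \<partial>M) = (\<integral>w. \<psi> (Z w, y w) \<partial>M) * (\<integral>u. \<phi> u \<partial>N0)"
proof -
  note pm = prod_meas[OF assms(1,2)]
  have "(\<integral>\<^sup>+w. ennreal (\<psi> (Z w, y w) * \<phi> (eps (Z w) (y w) (X w))) \<partial>M)
      = (\<integral>\<^sup>+w. ennreal (\<psi> (Z w, y w)) * ennreal (\<phi> (eps (Z w) (y w) (X w))) \<partial>M)"
    using nn by (simp add: ennreal_mult)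
  also have "\<dots> = (\<integral>\<^sup>+w. ennreal (\<psi> (Z w, y w)) \<partial>M) * (\<integral>\<^sup>+u. ennreal (\<phi> u) \<partial>N0)"
    by (rule KN) auto
  also have "(\<integral>\<^sup>+w. ennreal (\<psi> (Z w, y w)) \<partial>M) = ennreal (\<integral>w. \<psi> (Z w, y w) \<partial>M)"
    by (rule nn_integral_eq_integral[OF i1]) (simp add: nn)
  also have "(\<integral>\<^sup>+u. ennreal (\<phi> u) \<partial>N0) = ennreal (\<integral>u. \<phi> u \<partial>N0)"
    by (rule nn_integral_eq_integral[OF i2]) (simp add: nn)
  also have "ennreal (\<integral>w. \<psi> (Z w, y w) \<partial>M) * ennreal (\<integral>u. \<phi> u \<partial>N0)
      = ennreal ((\<integral>w. \<psi> (Z w, y w) \<partial>M) * (\<integral>u. \<phi> u \<partial>N0))"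
    by (rule ennreal_mult[symmetric]) (auto intro!: integral_nonneg_AE simp: nn)
  finally have e: "(\<integral>\<^sup>+w. ennreal (\<psi> (Z w, y w) * \<phi> (eps (Z w) (y w) (X w))) \<partial>M)
      = ennreal ((\<integral>w. \<psi> (Z w, y w) \<partial>M) * (\<integral>u. \<phi> u \<partial>N0))" .
  have "integrable M (\<lambda>w. \<psi> (Z w, y w) * \<phi> (eps (Z w) (y w) (X w)))"
    by (rule integrableI_nonneg) (use pm(1) nn e in auto)
  moreover have "(\<integral>w. \<psi> (Z w, y w) * \<phi> (eps (Z w) (y w) (X w)) \<partial>M) = (\<integral>w. \<psi> (Z w, y w) \<partial>M) * (\<integral>u. \<phi> u \<partial>N0)"
    by (subst integral_eq_nn_integral) (use pm(1) nn e in \<open>auto intro!: integral_nonneg_AE\<close>)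
  ultimately show ?thesis by blast
qed

lemma RV:
  fixes \<psi> :: "(real^'q) \<times> real \<Rightarrow> real" and \<phi> :: "real^'p \<Rightarrow> real"
  assumes [measurable]: "\<psi> \<in> borel_measurable borel" "\<phi> \<in> borel_measurable borel"
    and i1: "integrable M (\<lambda>w. \<psi> (Z w, y w))" and i2: "integrable N0 \<phi>"
  shows "integrable M (\<lambda>w. \<psi> (Z w, y w) * \<phi> (eps (Z w) (y w) (X w)))
    \<and> (\<integral>w. \<psi> (Z w, y w) * \<phi> (eps (Z w) (y w) (X w)) \<partial>M) = (\<integral>w. \<psi> (Z w, y w) \<partial>M) * (\<integral>u. \<phi> u \<partial>N0)"
proof -
  define p1 where "p1 q = max (\<psi> q) 0" for q
  define n1 where "n1 q = max (- \<psi> q) 0" for q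
  define p2 where "p2 u = max (\<phi> u) 0" for u
  define n2 where "n2 u = max (- \<phi> u) 0" for u
  have m[measurable]: "p1 \<in> borel_measurable borel" "n1 \<in> borel_measurable borel"
    "p2 \<in> borel_measurable borel" "n2 \<in> borel_measurable borel"
    unfolding p1_def n1_def p2_def n2_def by measurable
  have nn: "\<And>q. 0 \<le> p1 q" "\<And>q. 0 \<le> n1 q" "\<And>u. 0 \<le> p2 u" "\<And>u. 0 \<le> n2 u"
    by (simp_all add: p1_def n1_def p2_def n2_def)
  have i1': "integrable M (\<lambda>w. p1 (Z w, y w))" "integrable M (\<lambda>w. n1 (Z w, y w))"
    unfolding p1_def n1_def using i1 by auto
  have i2': "integrable N0 p2" "integrable N0 n2"
    unfolding p2_def n2_def using i2 g0.NP.integrable_const by auto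
  note A = RVpos[OF m(1) m(3) nn(1) nn(3) i1'(1) i2'(1)]
  note B = RVpos[OF m(2) m(4) nn(2) nn(4) i1'(2) i2'(2)]
  note Cc = RVpos[OF m(1) m(4) nn(1) nn(4) i1'(1) i2'(2)]
  note D = RVpos[OF m(2) m(3) nn(2) nn(3) i1'(2) i2'(1)]
  have pt: "\<psi> q * \<phi> u = (p1 q * p2 u + n1 q * n2 u) - (p1 q * n2 u + n1 q * p2 u)" for q u
    unfolding p1_def n1_def p2_def n2_def
    by (cases "0 \<le> \<psi> q"; cases "0 \<le> \<phi> u") (simp_all add: max_def)
  have ps: "\<psi> q = p1 q - n1 q" for q unfolding p1_def n1_def by (simp add: max_def)
  have ph: "\<phi> u = p2 u - n2 u" for u unfolding p2_def n2_def by (simp add: max_def)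
  let ?f = "\<lambda>w. (p1 (Z w, y w) * p2 (eps (Z w) (y w) (X w)) + n1 (Z w, y w) * n2 (eps (Z w) (y w) (X w)))
      - (p1 (Z w, y w) * n2 (eps (Z w) (y w) (X w)) + n1 (Z w, y w) * p2 (eps (Z w) (y w) (X w)))"
  have eqf: "(\<lambda>w. \<psi> (Z w, y w) * \<phi> (eps (Z w) (y w) (X w))) = ?f" by (simp add: pt)
  have "integrable M ?f" using A B Cc D by auto
  moreover have "(\<integral>w. ?f w \<partial>M) = (\<integral>w. \<psi> (Z w, y w) \<partial>M) * (\<integral>u. \<phi> u \<partial>N0)"
  proof -
    have "(\<integral>w. ?f w \<partial>M) = ((\<integral>w. p1 (Z w, y w) \<partial>M) * (\<integral>u. p2 u \<partial>N0) + (\<integral>w. n1 (Z w, y w) \<partial>M) * (\<integral>u. n2 u \<partial>N0))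
       - ((\<integral>w. p1 (Z w, y w) \<partial>M) * (\<integral>u. n2 u \<partial>N0) + (\<integral>w. n1 (Z w, y w) \<partial>M) * (\<integral>u. p2 u \<partial>N0))"
      using A B Cc D by (simp add: Bochner_Integration.integral_diff Bochner_Integration.integral_add)
    also have "\<dots> = ((\<integral>w. p1 (Z w, y w) \<partial>M) - (\<integral>w. n1 (Z w, y w) \<partial>M)) * ((\<integral>u. p2 u \<partial>N0) - (\<integral>u. n2 u \<partial>N0))"
      by (simp add: algebra_simps)
    also have "(\<integral>w. p1 (Z w, y w) \<partial>M) - (\<integral>w. n1 (Z w, y w) \<partial>M) = (\<integral>w. \<psi> (Z w, y w) \<partial>M)"
    proof -
      have "(\<integral>w. \<psi> (Z w, y w) \<partial>M) = (\<integral>w. p1 (Z w, y w) - n1 (Z w, y w) \<partial>M)" by (simp only: ps)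
      also have "\<dots> = (\<integral>w. p1 (Z w, y w) \<partial>M) - (\<integral>w. n1 (Z w, y w) \<partial>M)"
        by (rule Bochner_Integration.integral_diff[OF i1'])
      finally show ?thesis by simp
    qed
    also have "(\<integral>u. p2 u \<partial>N0) - (\<integral>u. n2 u \<partial>N0) = (\<integral>u. \<phi> u \<partial>N0)"
    proof -
      have "(\<integral>u. \<phi> u \<partial>N0) = (\<integral>u. p2 u - n2 u \<partial>N0)" by (simp only: ph)
      also have "\<dots> = (\<integral>u. p2 u \<partial>N0) - (\<integral>u. n2 u \<partial>N0)"
        by (rule Bochner_Integration.integral_diff[OF i2'])
      finally show ?thesis by simp
    qed
    finally show ?thesis .
  qed
  ultimately show ?thesis unfolding eqf by blast
qed

end


lemma vec_nth_meas0: "(\<lambda>x::real^'n. x $ i) \<in> borel_measurable borel"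
  by (simp only: cart_eq_inner_axis) (intro borel_measurable_continuous_onI continuous_intros)

lemma vec_nth_meas[measurable (raw)]:
  "f \<in> borel_measurable M \<Longrightarrow> (\<lambda>x. (f x :: real^'n) $ i) \<in> borel_measurable M"
  using measurable_compose[OF _ vec_nth_meas0] by blast

context prob_space
begin

definition "L2 (f :: 'a \<Rightarrow> real) \<longleftrightarrow> f \<in> borel_measurable M \<and> integrable M (\<lambda>w. (f w)^2)"
definition "cv (f :: 'a \<Rightarrow> real) (g :: 'a \<Rightarrow> real) = expectation (\<lambda>w. (f w - expectation f) * (g w - expectation g))"

lemma L2_int: "L2 f \<Longrightarrow> integrable M f"
  unfolding L2_def
proof (elim conjE, rule Bochner_Integration.integrable_bound[where f="\<lambda>w. 1 + (f w)^2"])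
  assume "integrable M (\<lambda>w. (f w)^2)" then show "integrable M (\<lambda>w. 1 + (f w)^2)" by auto
  assume "f \<in> borel_measurable M" then show "f \<in> borel_measurable M" .
  show "AE x in M. norm (f x) \<le> norm (1 + (f x)^2)"
  proof (rule AE_I2)
    fix x
    have "\<bar>f x\<bar> \<le> 1 + (f x)^2"
    proof (cases "\<bar>f x\<bar> \<le> 1")
      case True then show ?thesis by (simp add: add_increasing2)
    next
      case False
      then have "\<bar>f x\<bar> * 1 \<le> \<bar>f x\<bar> * \<bar>f x\<bar>" by (intro mult_left_mono) auto
      then have "\<bar>f x\<bar> \<le> (f x)^2" by (simp add: power2_eq_square abs_mult_self_eq)
      then show ?thesis by simp
    qed
    then show "norm (f x) \<le> norm (1 + (f x)^2)" by simp
  qed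
qed

lemma L2_mult: "L2 f \<Longrightarrow> L2 g \<Longrightarrow> integrable M (\<lambda>w. f w * g w)"
  unfolding L2_def
proof (elim conjE, rule Bochner_Integration.integrable_bound[where f="\<lambda>w. (f w)^2 + (g w)^2"])
  assume "integrable M (\<lambda>w. (f w)^2)" "integrable M (\<lambda>w. (g w)^2)"
  then show "integrable M (\<lambda>w. (f w)^2 + (g w)^2)" by auto
  assume [measurable]: "f \<in> borel_measurable M" "g \<in> borel_measurable M"
  show "(\<lambda>w. f w * g w) \<in> borel_measurable M" by measurable
  show "AE x in M. norm (f x * g x) \<le> norm ((f x)^2 + (g x)^2)"
  proof (rule AE_I2)
    fix x
    have "0 \<le> (\<bar>f x\<bar> - \<bar>g x\<bar>)^2" by simp
    then have "2 * \<bar>f x * g x\<bar> \<le> (f x)^2 + (g x)^2"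
      by (simp add: power2_eq_square algebra_simps abs_mult)
    then show "norm (f x * g x) \<le> norm ((f x)^2 + (g x)^2)" by simp
  qed
qed

lemma L2_sq: "L2 f \<Longrightarrow> integrable M (\<lambda>w. (f w)^2)" unfolding L2_def by simp

lemma L2_meas: "L2 f \<Longrightarrow> f \<in> borel_measurable M" unfolding L2_def by simp

lemma L2I: "f \<in> borel_measurable M \<Longrightarrow> integrable M (\<lambda>w. (f w)^2) \<Longrightarrow> L2 f" unfolding L2_def by simp

lemma L2_const: "L2 (\<lambda>w. c)" unfolding L2_def by simp

lemma L2_add: "L2 f \<Longrightarrow> L2 g \<Longrightarrow> L2 (\<lambda>w. f w + g w)"
proof (rule L2I)
  assume f: "L2 f" and g: "L2 g"
  note [measurable] = L2_meas[OF f] L2_meas[OF g]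
  show "(\<lambda>w. f w + g w) \<in> borel_measurable M" by measurable
  have "integrable M (\<lambda>w. (f w)^2 + (g w)^2 + 2 * (f w * g w))"
    using L2_sq[OF f] L2_sq[OF g] L2_mult[OF f g] by auto
  then show "integrable M (\<lambda>w. (f w + g w)^2)" by (simp add: power2_sum mult.assoc)
qed

lemma L2_scale: "L2 f \<Longrightarrow> L2 (\<lambda>w. c * f w)"
proof (rule L2I)
  assume f: "L2 f"
  note [measurable] = L2_meas[OF f]
  show "(\<lambda>w. c * f w) \<in> borel_measurable M" by measurable
  have "integrable M (\<lambda>w. c^2 * (f w)^2)" using L2_sq[OF f] by auto
  then show "integrable M (\<lambda>w. (c * f w)^2)" by (simp add: power_mult_distrib)
qed

lemma L2_diff: "L2 f \<Longrightarrow> L2 g \<Longrightarrow> L2 (\<lambda>w. f w - g w)"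
  using L2_add[of f "\<lambda>w. (-1) * g w"] L2_scale[of g "-1"] by simp

lemma L2_sum: "finite L \<Longrightarrow> (\<And>l. l \<in> L \<Longrightarrow> L2 (g l)) \<Longrightarrow> L2 (\<lambda>w. \<Sum>l\<in>L. g l w)"
proof (induction L rule: finite_induct)
  case empty then show ?case by (simp add: L2_const)
next
  case (insert a F) then show ?case using L2_add[of "g a" "\<lambda>w. \<Sum>l\<in>F. g l w"] by simp
qed

lemma cv_eq: assumes "L2 f" "L2 g" shows "cv f g = expectation (\<lambda>w. f w * g w) - expectation f * expectation g"
proof -
  note i = L2_int[OF assms(1)] L2_int[OF assms(2)] L2_mult[OF assms]
  have "cv f g = expectation (\<lambda>w. f w * g w - expectation g * f w - (expectation f * g w - expectation f * expectation g))"
    unfolding cv_def by (simp add: algebra_simps)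
  also have "\<dots> = expectation (\<lambda>w. f w * g w) - expectation g * expectation f - (expectation f * expectation g - expectation f * expectation g)"
    using i by (simp add: prob_space)
  finally show ?thesis by simp
qed

lemma cv_sym: "cv f g = cv g f" unfolding cv_def by (simp add: mult.commute)

lemma cv_add: assumes "L2 f" "L2 g" "L2 h" shows "cv f (\<lambda>w. g w + h w) = cv f g + cv f h"
proof -
  note i = L2_int[OF assms(1)] L2_int[OF assms(2)] L2_int[OF assms(3)] L2_mult[OF assms(1,2)] L2_mult[OF assms(1,3)]
  show ?thesis
    unfolding cv_eq[OF assms(1) L2_add[OF assms(2,3)]] cv_eq[OF assms(1,2)] cv_eq[OF assms(1,3)]
    using i by (simp add: distrib_left algebra_simps)
qed

lemma cv_scale: assumes "L2 f" "L2 g" shows "cv f (\<lambda>w. c * g w) = c * cv f g"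
proof -
  note i = L2_int[OF assms(1)] L2_int[OF assms(2)] L2_mult[OF assms(1,2)]
  have e: "(\<lambda>w. f w * (c * g w)) = (\<lambda>w. c * (f w * g w))" by (simp add: algebra_simps)
  show ?thesis
    unfolding cv_eq[OF assms(1) L2_scale[OF assms(2)]] cv_eq[OF assms(1,2)] e
    using i by (simp add: algebra_simps)
qed

lemma cv_const: assumes "L2 f" shows "cv f (\<lambda>w. c) = 0"
  unfolding cv_eq[OF assms L2_const] using L2_int[OF assms] by (simp add: prob_space)

lemma cv_diff: assumes "L2 f" "L2 g" "L2 h" shows "cv f (\<lambda>w. g w - h w) = cv f g - cv f h"
  using cv_add[OF assms(1,2) L2_scale[OF assms(3), of "-1"]] cv_scale[OF assms(1,3), of "-1"] by simp

lemma cv_sum: "finite L \<Longrightarrow> L2 f \<Longrightarrow> (\<And>l. l \<in> L \<Longrightarrow> L2 (g l)) \<Longrightarrow> cv f (\<lambda>w. \<Sum>l\<in>L. g l w) = (\<Sum>l\<in>L. cv f (g l))"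
proof (induction L rule: finite_induct)
  case empty then show ?case using cv_const[of f 0] by simp
next
  case (insert a F)
  have "cv f (\<lambda>w. \<Sum>l\<in>insert a F. g l w) = cv f (\<lambda>w. g a w + (\<Sum>l\<in>F. g l w))"
    using insert by simp
  also have "\<dots> = cv f (g a) + cv f (\<lambda>w. \<Sum>l\<in>F. g l w)"
    using insert by (intro cv_add L2_sum) auto
  finally show ?case using insert by simp
qed

lemma variance_cv: "variance f = cv f f"
  unfolding cv_def by (simp add: power2_eq_square)

end



context lmodel
begin

definition "ue w = eps (Z w) (y w) (X w)"

lemma ue_meas[measurable]: "(\<lambda>w. ue w $ i) \<in> borel_measurable M"
proof -
  have "(\<lambda>w. (\<lambda>(z, c, x). eps z c x) (Z w, y w, X w)) \<in> borel_measurable M"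
    by (rule comp_meas[OF eps_meas])
  then have "ue \<in> borel_measurable M" unfolding ue_def by simp
  then show ?thesis by (rule vec_nth_meas)
qed

lemma gaussS: "gauss \<Sigma>" by (rule gauss.intro[OF pd N0_prob[unfolded N0_def]])

lemma N0_first: "integrable N0 (\<lambda>u. u $ i) \<and> (\<integral>u. u $ i \<partial>N0) = 0"
  using gauss.first_moment[OF gaussS, of "axis i 1"] by (simp add: N0_def inner_axis')

lemma N0_cross: "integrable N0 (\<lambda>u. u $ i * u $ j) \<and> (\<integral>u. u $ i * u $ j \<partial>N0) = \<Sigma> $ i $ j"
  using gauss.cross_moment[OF gaussS, of "axis i 1" "axis j 1"]
  by (simp add: N0_def inner_axis' matrix_vector_mult_basis column_def)

lemma y_bound: "w \<in> space M \<Longrightarrow> \<bar>y w\<bar> \<le> 1" using y01 by auto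

lemma y_int: "integrable M y"
  by (rule Bochner_Integration.integrable_bound[where f="\<lambda>_. 1::real"]) (auto intro!: AE_I2 simp: y_bound)

lemma y_L2: "MP.L2 y"
proof (rule MP.L2I)
  show "y \<in> borel_measurable M" by simp
  show "integrable M (\<lambda>w. (y w)^2)"
  proof (rule Bochner_Integration.integrable_bound[where f="\<lambda>_. 1::real"])
    show "AE x in M. norm ((y x)^2) \<le> norm (1::real)"
    proof (rule AE_I')
      show "{x \<in> space M. \<not> norm ((y x)^2) \<le> norm (1::real)} \<subseteq> {}"
        using y01 by auto
    qed auto
  qed auto
qed

lemma mom:
  fixes \<psi> :: "(real^'q) \<times> real \<Rightarrow> real" and \<phi> :: "real^'p \<Rightarrow> real"
  assumes [measurable]: "\<psi> \<in> borel_measurable borel" "\<phi> \<in> borel_measurable borel"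
    and i1: "integrable M (\<lambda>w. \<psi> (Z w, y w))" and i2: "integrable N0 \<phi>"
  shows "integrable M (\<lambda>w. \<psi> (Z w, y w) * \<phi> (ue w))
    \<and> (\<integral>w. \<psi> (Z w, y w) * \<phi> (ue w) \<partial>M) = (\<integral>w. \<psi> (Z w, y w) \<partial>M) * (\<integral>u. \<phi> u \<partial>N0)"
  using RV[OF assms] unfolding ue_def .

lemma c1_meas: "(\<lambda>_::(real^'q) \<times> real. 1::real) \<in> borel_measurable borel" by simp

lemma ue_mean: "integrable M (\<lambda>w. ue w $ i) \<and> MP.expectation (\<lambda>w. ue w $ i) = 0"
proof -
  have "integrable M (\<lambda>w. (1::real))" by simp
  note r = mom[OF c1_meas vec_nth_meas0 this conjunct1[OF N0_first[of i]]]
  then show ?thesis using N0_first[of i] by simp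
qed

lemma ue_y: "integrable M (\<lambda>w. ue w $ i * y w) \<and> MP.expectation (\<lambda>w. ue w $ i * y w) = 0"
proof -
  have "(\<lambda>q :: (real^'q) \<times> real. snd q) \<in> borel_measurable borel"
    by (intro borel_measurable_continuous_onI continuous_intros)
  note r = mom[OF this vec_nth_meas0 _ conjunct1[OF N0_first[of i]]]
  have "integrable M (\<lambda>w. snd (Z w, y w))" using y_int by simp
  note r = r[OF this]
  then show ?thesis using N0_first[of i] by (simp add: mult.commute)
qed

lemma ue_cross: "integrable M (\<lambda>w. ue w $ i * ue w $ j) \<and> MP.expectation (\<lambda>w. ue w $ i * ue w $ j) = \<Sigma> $ i $ j"
proof -
  have m: "(\<lambda>u::real^'p. u $ i * u $ j) \<in> borel_measurable borel"
    using vec_nth_meas0[of i] vec_nth_meas0[of j] by measurable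
  have "integrable M (\<lambda>w. (1::real))" by simp
  note r = mom[where \<psi>="\<lambda>_. 1" and \<phi>="\<lambda>u. u $ i * u $ j", OF c1_meas m this conjunct1[OF N0_cross[of i j]]]
  have e: "(\<lambda>w. (\<lambda>_. 1::real) (Z w, y w) * (\<lambda>u. u $ i * u $ j) (ue w)) = (\<lambda>w. ue w $ i * ue w $ j)" by simp
  have e2: "(\<integral>w. (\<lambda>_. 1::real) (Z w, y w) \<partial>M) = 1" by (simp add: MP.prob_space)
  show ?thesis using r N0_cross[of i j] unfolding e e2 by simp
qed

lemma ue_L2: "MP.L2 (\<lambda>w. ue w $ i)"
  using ue_cross[of i i] by (intro MP.L2I) (auto simp: power2_eq_square)


lemma ue_Z:
  assumes iZ: "integrable M (\<lambda>w. Z w $ k)"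
  shows "integrable M (\<lambda>w. ue w $ i * Z w $ k) \<and> MP.expectation (\<lambda>w. ue w $ i * Z w $ k) = 0"
proof -
  have m: "(\<lambda>q :: (real^'q) \<times> real. fst q $ k) \<in> borel_measurable borel"
    by (simp only: cart_eq_inner_axis) (intro borel_measurable_continuous_onI continuous_intros)
  have i1: "integrable M (\<lambda>w. (\<lambda>q :: (real^'q) \<times> real. fst q $ k) (Z w, y w))" using iZ by simp
  note r = mom[where \<psi>="\<lambda>q. fst q $ k" and \<phi>="\<lambda>u. u $ i", OF m vec_nth_meas0 i1 conjunct1[OF N0_first[of i]]]
  have e: "(\<lambda>w. (\<lambda>q :: (real^'q) \<times> real. fst q $ k) (Z w, y w) * (\<lambda>u. u $ i) (ue w)) = (\<lambda>w. ue w $ i * Z w $ k)"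
    by (simp add: mult.commute)
  show ?thesis using r N0_first[of i] unfolding e by simp
qed

lemma sym_helper: "0 = - (a::real) + c \<Longrightarrow> a = c" by simp

lemma main:
  fixes W :: "'w \<Rightarrow> real^('p + 'q)" and b :: "real^('p + 'q)" and b1 :: "real^'p" and \<epsilon> :: "'w \<Rightarrow> real"
  assumes Zsq: "\<forall>i. integrable M (\<lambda>w. (Z w $ i)\<^sup>2)"
    and W_def: "W = (\<lambda>w. vconcat (X w) (Z w))"
    and invW: "invertible (cov_mat M W W)"
    and b_def: "b = matrix_inv (cov_mat M W W) *v cov_vec M W y"
    and b1_def: "b1 = (\<chi> k. b $ Inl k)"
    and e_def: "\<epsilon> = (\<lambda>w. y w - W w \<bullet> b)"
    and vpos: "prob_space.variance M \<epsilon> > 0"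
  shows "matrix_inv \<Sigma> *v (\<mu>1 - \<mu>0) = (1 / prob_space.variance M \<epsilon>) *\<^sub>R b1"
proof -
  define \<delta> where "\<delta> = \<mu>1 - \<mu>0"
  define R where "R i w = \<mu>0 $ i + (\<delta> $ i * y w + (\<Sum>k\<in>UNIV. C $ k $ i * Z w $ k))" for i w
  define v where "v = MP.cv \<epsilon> \<epsilon>"
  have v_var: "prob_space.variance M \<epsilon> = v" unfolding v_def by (rule MP.variance_cv)
  have Wl: "W w $ Inl i = X w $ i" "W w $ Inr k = Z w $ k" for w i k
    unfolding W_def vconcat_def by simp_all
  have Xdec: "X w $ i = ue w $ i + R i w" for w i
    unfolding ue_def eps_def R_def \<delta>_def
    by (simp add: vector_matrix_mult_def algebra_simps)
  have Zm[measurable]: "(\<lambda>w. Z w $ k) \<in> borel_measurable M" for k by measurable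
  have Xm[measurable]: "(\<lambda>w. X w $ k) \<in> borel_measurable M" for k by measurable
  have Z_L2: "MP.L2 (\<lambda>w. Z w $ k)" for k using Zsq by (intro MP.L2I) auto
  have Z_int: "integrable M (\<lambda>w. Z w $ k)" for k by (rule MP.L2_int[OF Z_L2])
  have CZ_L2: "MP.L2 (\<lambda>w. \<Sum>k\<in>UNIV. C $ k $ i * Z w $ k)" for i
    by (intro MP.L2_sum MP.L2_scale Z_L2) auto
  have R_L2: "MP.L2 (R i)" for i
    unfolding R_def[abs_def]
    by (intro MP.L2_add MP.L2_const MP.L2_scale y_L2 CZ_L2)
  have X_L2: "MP.L2 (\<lambda>w. X w $ i)" for i
    unfolding Xdec by (intro MP.L2_add ue_L2 R_L2)
  have W_L2: "MP.L2 (\<lambda>w. W w $ l)" for l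
    by (cases l) (simp_all add: Wl X_L2 Z_L2)
  have Wb: "W w \<bullet> b = (\<Sum>l\<in>UNIV. b $ l * W w $ l)" for w
    unfolding inner_vec_def by (simp add: mult.commute)
  have Sb_L2: "MP.L2 (\<lambda>w. \<Sum>l\<in>UNIV. b $ l * W w $ l)"
    by (intro MP.L2_sum MP.L2_scale W_L2) auto
  have e_L2: "MP.L2 \<epsilon>"
    unfolding e_def Wb by (intro MP.L2_diff y_L2 Sb_L2)
  have NE: "cov_mat M W W *v b = cov_vec M W y"
    unfolding b_def by (rule matrix_inv_mv(1)[OF invW])
  have cvW: "cov_mat M W W $ k $ l = MP.cv (\<lambda>w. W w $ k) (\<lambda>w. W w $ l)" for k l
    unfolding cov_mat_def MP.cv_def by simp
  have cvy: "cov_vec M W y $ k = MP.cv (\<lambda>w. W w $ k) y" for k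
    unfolding cov_vec_def MP.cv_def by simp
  have C1: "MP.cv (\<lambda>w. W w $ k) \<epsilon> = 0" for k
  proof -
    have "MP.cv (\<lambda>w. W w $ k) \<epsilon> = MP.cv (\<lambda>w. W w $ k) y - MP.cv (\<lambda>w. W w $ k) (\<lambda>w. \<Sum>l\<in>UNIV. b $ l * W w $ l)"
      unfolding e_def Wb by (rule MP.cv_diff[OF W_L2 y_L2 Sb_L2])
    also have "MP.cv (\<lambda>w. W w $ k) (\<lambda>w. \<Sum>l\<in>UNIV. b $ l * W w $ l) = (\<Sum>l\<in>UNIV. MP.cv (\<lambda>w. W w $ k) (\<lambda>w. b $ l * W w $ l))"
      by (rule MP.cv_sum) (auto intro: W_L2 MP.L2_scale)
    also have "\<dots> = (\<Sum>l\<in>UNIV. cov_mat M W W $ k $ l * b $ l)"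
      by (intro sum.cong refl) (simp add: MP.cv_scale[OF W_L2 W_L2] cvW)
    also have "\<dots> = (cov_mat M W W *v b) $ k" by (simp add: matrix_vector_mult_def)
    also have "\<dots> = MP.cv (\<lambda>w. W w $ k) y" by (simp add: NE cvy)
    finally show ?thesis by simp
  qed
  have eW: "MP.cv \<epsilon> (\<lambda>w. W w $ l) = 0" for l by (subst MP.cv_sym) (rule C1)
  have eZ: "MP.cv \<epsilon> (\<lambda>w. Z w $ k) = 0" for k using eW[of "Inr k"] by (simp only: Wl)
  have C2: "MP.cv \<epsilon> y = v"
  proof -
    have ye: "y = (\<lambda>w. \<epsilon> w + (\<Sum>l\<in>UNIV. b $ l * W w $ l))" unfolding e_def Wb by simp
    have "MP.cv \<epsilon> y = v + MP.cv \<epsilon> (\<lambda>w. \<Sum>l\<in>UNIV. b $ l * W w $ l)"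
      unfolding v_def by (subst ye, rule MP.cv_add[OF e_L2 e_L2 Sb_L2])
    also have "MP.cv \<epsilon> (\<lambda>w. \<Sum>l\<in>UNIV. b $ l * W w $ l) = (\<Sum>l\<in>UNIV. MP.cv \<epsilon> (\<lambda>w. b $ l * W w $ l))"
      by (rule MP.cv_sum) (auto intro: e_L2 W_L2 MP.L2_scale)
    also have "\<dots> = 0"
      by (intro sum.neutral ballI) (simp add: MP.cv_scale[OF e_L2 W_L2] eW)
    finally show ?thesis by simp
  qed
  have ue_int: "integrable M (\<lambda>w. ue w $ i)" for i using ue_mean by blast
  have cu_y: "MP.cv (\<lambda>w. ue w $ i) y = 0" for i
  proof -
    have "MP.cv (\<lambda>w. ue w $ i) y = MP.expectation (\<lambda>w. ue w $ i * y w) - MP.expectation (\<lambda>w. ue w $ i) * MP.expectation y"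
      by (rule MP.cv_eq[OF ue_L2 y_L2])
    also have "\<dots> = 0" by (simp only: conjunct2[OF ue_mean] conjunct2[OF ue_y] mult_zero_left diff_zero)
    finally show ?thesis .
  qed
  have cu_Z: "MP.cv (\<lambda>w. ue w $ i) (\<lambda>w. Z w $ k) = 0" for i k
  proof -
    have "MP.cv (\<lambda>w. ue w $ i) (\<lambda>w. Z w $ k) = MP.expectation (\<lambda>w. ue w $ i * Z w $ k) - MP.expectation (\<lambda>w. ue w $ i) * MP.expectation (\<lambda>w. Z w $ k)"
      by (rule MP.cv_eq[OF ue_L2 Z_L2])
    also have "\<dots> = 0" by (simp only: conjunct2[OF ue_mean] conjunct2[OF ue_Z[OF Z_int]] mult_zero_left diff_zero)
    finally show ?thesis .
  qed
  have cu_u: "MP.cv (\<lambda>w. ue w $ i) (\<lambda>w. ue w $ j) = \<Sigma> $ i $ j" for i j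
  proof -
    have "MP.cv (\<lambda>w. ue w $ i) (\<lambda>w. ue w $ j) = MP.expectation (\<lambda>w. ue w $ i * ue w $ j) - MP.expectation (\<lambda>w. ue w $ i) * MP.expectation (\<lambda>w. ue w $ j)"
      by (rule MP.cv_eq[OF ue_L2 ue_L2])
    also have "\<dots> = \<Sigma> $ i $ j" by (simp only: conjunct2[OF ue_mean] conjunct2[OF ue_cross] mult_zero_left diff_zero)
    finally show ?thesis .
  qed
  have cu_CZ: "MP.cv (\<lambda>w. ue w $ i) (\<lambda>w. \<Sum>k\<in>UNIV. C $ k $ j * Z w $ k) = 0" for i j
  proof -
    have "MP.cv (\<lambda>w. ue w $ i) (\<lambda>w. \<Sum>k\<in>UNIV. C $ k $ j * Z w $ k) = (\<Sum>k\<in>UNIV. MP.cv (\<lambda>w. ue w $ i) (\<lambda>w. C $ k $ j * Z w $ k))"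
      by (rule MP.cv_sum) (auto intro: ue_L2 Z_L2 MP.L2_scale)
    also have "\<dots> = 0" by (simp add: MP.cv_scale[OF ue_L2 Z_L2] cu_Z)
    finally show ?thesis .
  qed
  have cu_R: "MP.cv (\<lambda>w. ue w $ i) (R j) = 0" for i j
  proof -
    have "MP.cv (\<lambda>w. ue w $ i) (R j) = MP.cv (\<lambda>w. ue w $ i) (\<lambda>w. \<mu>0 $ j) + (MP.cv (\<lambda>w. ue w $ i) (\<lambda>w. \<delta> $ j * y w) + MP.cv (\<lambda>w. ue w $ i) (\<lambda>w. \<Sum>k\<in>UNIV. C $ k $ j * Z w $ k))"
      unfolding R_def[abs_def]
      by (simp add: MP.cv_add[OF ue_L2 MP.L2_const MP.L2_add[OF MP.L2_scale[OF y_L2] CZ_L2]]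
          MP.cv_add[OF ue_L2 MP.L2_scale[OF y_L2] CZ_L2])
    also have "\<dots> = 0"
      by (simp add: MP.cv_const[OF ue_L2] MP.cv_scale[OF ue_L2 y_L2] cu_y cu_CZ)
    finally show ?thesis .
  qed
  have cu_X: "MP.cv (\<lambda>w. ue w $ i) (\<lambda>w. X w $ j) = \<Sigma> $ i $ j" for i j
  proof -
    have "MP.cv (\<lambda>w. ue w $ i) (\<lambda>w. X w $ j) = MP.cv (\<lambda>w. ue w $ i) (\<lambda>w. ue w $ j) + MP.cv (\<lambda>w. ue w $ i) (R j)"
      unfolding Xdec by (rule MP.cv_add[OF ue_L2 ue_L2 R_L2])
    then show ?thesis by (simp add: cu_u cu_R)
  qed
  have D: "MP.cv (\<lambda>w. ue w $ i) \<epsilon> = - (\<Sigma> *v b1) $ i" for i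
  proof -
    have "MP.cv (\<lambda>w. ue w $ i) \<epsilon> = MP.cv (\<lambda>w. ue w $ i) y - MP.cv (\<lambda>w. ue w $ i) (\<lambda>w. \<Sum>l\<in>UNIV. b $ l * W w $ l)"
      unfolding e_def Wb by (rule MP.cv_diff[OF ue_L2 y_L2 Sb_L2])
    also have "MP.cv (\<lambda>w. ue w $ i) (\<lambda>w. \<Sum>l\<in>UNIV. b $ l * W w $ l) = (\<Sum>l\<in>UNIV. MP.cv (\<lambda>w. ue w $ i) (\<lambda>w. b $ l * W w $ l))"
      by (rule MP.cv_sum) (auto intro: ue_L2 W_L2 MP.L2_scale)
    also have "\<dots> = (\<Sum>l\<in>UNIV. b $ l * MP.cv (\<lambda>w. ue w $ i) (\<lambda>w. W w $ l))"
      by (simp add: MP.cv_scale[OF ue_L2 W_L2])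
    also have "\<dots> = (\<Sum>l\<in>(UNIV <+> UNIV). b $ l * MP.cv (\<lambda>w. ue w $ i) (\<lambda>w. W w $ l))"
      by (simp add: UNIV_Plus_UNIV)
    also have "\<dots> = (\<Sum>j\<in>UNIV. b $ Inl j * \<Sigma> $ i $ j) + (\<Sum>k\<in>UNIV. b $ Inr k * 0)"
      by (subst sum.Plus) (simp_all add: Wl cu_X cu_Z)
    also have "\<dots> = (\<Sigma> *v b1) $ i"
      by (simp add: matrix_vector_mult_def b1_def mult.commute)
    finally show ?thesis using cu_y by simp
  qed
  have E: "MP.cv \<epsilon> (R i) = \<delta> $ i * v" for i
  proof -
    have cZ: "MP.cv \<epsilon> (\<lambda>w. \<Sum>k\<in>UNIV. C $ k $ i * Z w $ k) = 0"
    proof -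
      have "MP.cv \<epsilon> (\<lambda>w. \<Sum>k\<in>UNIV. C $ k $ i * Z w $ k) = (\<Sum>k\<in>UNIV. MP.cv \<epsilon> (\<lambda>w. C $ k $ i * Z w $ k))"
        by (rule MP.cv_sum) (auto intro: e_L2 Z_L2 MP.L2_scale)
      also have "\<dots> = 0"
        by (simp add: MP.cv_scale[OF e_L2 Z_L2] eZ)
      finally show ?thesis .
    qed
    have "MP.cv \<epsilon> (R i) = MP.cv \<epsilon> (\<lambda>w. \<mu>0 $ i) + (MP.cv \<epsilon> (\<lambda>w. \<delta> $ i * y w) + MP.cv \<epsilon> (\<lambda>w. \<Sum>k\<in>UNIV. C $ k $ i * Z w $ k))"
      unfolding R_def[abs_def]
      by (simp add: MP.cv_add[OF e_L2 MP.L2_const MP.L2_add[OF MP.L2_scale[OF y_L2] CZ_L2]]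
          MP.cv_add[OF e_L2 MP.L2_scale[OF y_L2] CZ_L2])
    also have "\<dots> = \<delta> $ i * v"
      by (simp add: MP.cv_const[OF e_L2] MP.cv_scale[OF e_L2 y_L2] C2 cZ)
    finally show ?thesis .
  qed
  have F: "(\<Sigma> *v b1) $ i = v * \<delta> $ i" for i
  proof -
    have "0 = MP.cv (\<lambda>w. W w $ Inl i) \<epsilon>" using C1 by simp
    also have "\<dots> = MP.cv \<epsilon> (\<lambda>w. X w $ i)" by (subst MP.cv_sym) (simp only: Wl)
    also have "\<dots> = MP.cv \<epsilon> (\<lambda>w. ue w $ i) + MP.cv \<epsilon> (R i)"
      unfolding Xdec by (rule MP.cv_add[OF e_L2 ue_L2 R_L2])
    also have "\<dots> = - (\<Sigma> *v b1) $ i + \<delta> $ i * v"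
      by (simp only: E MP.cv_sym[of \<epsilon> "\<lambda>w. ue w $ i"] D)
    finally have "0 = - (\<Sigma> *v b1) $ i + \<delta> $ i * v" .
    then have "(\<Sigma> *v b1) $ i = \<delta> $ i * v" by (rule sym_helper)
    then show ?thesis by (simp only: mult.commute)
  qed
  have Sb: "\<Sigma> *v b1 = v *\<^sub>R \<delta>"
  proof (rule vec_eq_iff[THEN iffD2], rule allI)
    fix i show "(\<Sigma> *v b1) $ i = (v *\<^sub>R \<delta>) $ i" unfolding F by simp
  qed
  have inv: "invertible \<Sigma>" by (rule posdef_invertible[OF pd])
  have "b1 = matrix_inv \<Sigma> *v (\<Sigma> *v b1)" by (simp add: matrix_inv_mv(2)[OF inv])
  also have "\<dots> = v *\<^sub>R (matrix_inv \<Sigma> *v \<delta>)" by (simp add: Sb matrix_vector_mult_scaleR)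
  finally have "b1 = v *\<^sub>R (matrix_inv \<Sigma> *v \<delta>)" .
  moreover have "v > 0" using vpos v_var by simp
  ultimately show ?thesis unfolding v_var \<delta>_def by simp
qed

end


theorem lemma1:
  fixes M :: "'w measure"
    and y :: "'w \<Rightarrow> real"
    and X :: "'w \<Rightarrow> real^'p"
    and Z :: "'w \<Rightarrow> real^'q"
    and \<mu>0 \<mu>1 :: "real^'p"
    and C :: "real^'p^'q"
    and \<Sigma> :: "real^'p^'p"
    and \<gamma>0 :: real
    and \<gamma>1 :: "real^'q"
  assumes "prob_space M"
    and "y \<in> borel_measurable M" and "X \<in> borel_measurable M" and "Z \<in> borel_measurable M"
    and "\<forall>w\<in>space M. y w \<in> {0, 1}"
    and "pos_def_mat \<Sigma>"
    and model: "distr M borel (\<lambda>w. (Z w, y w, X w)) =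
      bind (distr M borel Z) (\<lambda>z.
        bind (measure_pmf (bernoulli_pmf (logistic (\<gamma>0 + z \<bullet> \<gamma>1)))) (\<lambda>j.
          bind (mvn \<Sigma> ((if j then \<mu>1 else \<mu>0) + z v* C)) (\<lambda>x.
            return borel (z, (if j then 1 else 0), x))))"
    and "\<forall>i. integrable M (\<lambda>w. (Z w $ i)\<^sup>2)"
    and "invertible (cov_mat M Z Z)"
    and "invertible (cov_mat M (\<lambda>w. vconcat (X w) (Z w)) (\<lambda>w. vconcat (X w) (Z w)))"
  defines "W \<equiv> (\<lambda>w. vconcat (X w) (Z w))"
  defines "b \<equiv> matrix_inv (cov_mat M W W) *v cov_vec M W y"
  defines "b1 \<equiv> (\<chi> k. b $ Inl k)"
  defines "\<epsilon> \<equiv> (\<lambda>w. y w - W w \<bullet> b)"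
  defines "\<beta>1 \<equiv> matrix_inv \<Sigma> *v (\<mu>1 - \<mu>0)"
  assumes "prob_space.variance M \<epsilon> > 0"
  shows "\<beta>1 = (1 / prob_space.variance M \<epsilon>) *\<^sub>R b1"
proof -
  have L: "lmodel M y X Z \<mu>0 \<mu>1 C \<Sigma> \<gamma>0 \<gamma>1"
    by (rule lmodel.intro[OF assms(1) assms(2) assms(3) assms(4) assms(5) assms(6) model])
  have Wd: "W = (\<lambda>w. vconcat (X w) (Z w))" using \<open>W \<equiv> (\<lambda>w. vconcat (X w) (Z w))\<close> by simp
  have bd: "b = matrix_inv (cov_mat M W W) *v cov_vec M W y" using \<open>b \<equiv> matrix_inv (cov_mat M W W) *v cov_vec M W y\<close> by simp
  have b1d: "b1 = (\<chi> k. b $ Inl k)" using \<open>b1 \<equiv> (\<chi> k. b $ Inl k)\<close> by simp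
  have ed: "\<epsilon> = (\<lambda>w. y w - W w \<bullet> b)" using \<open>\<epsilon> \<equiv> (\<lambda>w. y w - W w \<bullet> b)\<close> by simp
  have invW: "invertible (cov_mat M W W)"
    using \<open>invertible (cov_mat M (\<lambda>w. vconcat (X w) (Z w)) (\<lambda>w. vconcat (X w) (Z w)))\<close> Wd by simp
  have "matrix_inv \<Sigma> *v (\<mu>1 - \<mu>0) = (1 / prob_space.variance M \<epsilon>) *\<^sub>R b1"
    by (rule lmodel.main[OF L \<open>\<forall>i. integrable M (\<lambda>w. (Z w $ i)\<^sup>2)\<close> Wd invW bd b1d ed
          \<open>prob_space.variance M \<epsilon> > 0\<close>])
  then show ?thesis using \<open>\<beta>1 \<equiv> matrix_inv \<Sigma> *v (\<mu>1 - \<mu>0)\<close> by simp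
qed

end
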